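(* Let $C\subseteq\mathbb{F}_q^{2n}$ be a symplectic self-orthogonal $\mathbb{F}_q$-linear code, let $Q(C)\subseteq\mathbb{C}^{q^n}$ be the stabilizer code defined by $C$, and let $I\subsetneq\{1,\dots,n\}$. Then $Q(C)$ corrects erasures at $I$ if and only if \[\sigma_I(C)=\sigma_I\left(C^{\perp_s}\right).\]
   Context: $q$ is a power of a prime $p$, $\mathbb{F}_q$ is the field with $q$ elements. Vectors of $\mathbb{F}_q^{2n}$ are written $(\mathbf a|\mathbf b)$ with $\mathbf a,\mathbf b\in\mathbb{F}_q^n$, and the coordinate pair $(a_j,b_j)$ is indexed by $j\in\{1,\dots,n\}$. The symplectic form is $(\mathbf a|\mathbf b)\cdot_s(\mathbf c|\mathbf d)=\mathbf a\cdot\mathbf d-\mathbf b\cdot\mathbf c$ (Euclidean dot products); $C^{\perp_s}$ is the dual of $C$ for $\cdot_s$, and $C$ is symplectic self-orthogonal if $C\subseteq C^{\perp_s}$. For $R\subseteq\{1,\dots,n\}$ and $\mathbf y=(\mathbf a|\mathbf b)$, $\pi_R(\mathbf y)=(a_j|b_j)_{j\in R}$; the shortening of a code $D$ at $R$ is $\sigma_R(D)=\{\pi_R(\mathbf y):\mathbf y=(\mathbf a|\mathbf b)\in D,\ \mathrm{supp}(\mathbf a)\cup\mathrm{supp}(\mathbf b)\subseteq R\}$ (the set $R$ indicates the coordinates kept). Let $\xi=e^{2\pi\iota/p}$; on $\mathbb{C}^q$ with basis $\{|x\rangle:x\in\mathbb F_q\}$ let $X(a)|x\rangle=|x+a\rangle$,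 $Z(b)|x\rangle=\xi^{\mathrm{tr}_{q/p}(bx)}|x\rangle$, and $E_{(\mathbf a,\mathbf b)}=\bigotimes_{j=1}^n X(a_j)Z(b_j)$ on $\mathbb C^{q^n}=(\mathbb C^q)^{\otimes n}$. The stabilizer code $Q(C)$ is the common eigenspace $\{v: Ev=\lambda(E)v\ \forall E\in S\}$, where $S$ is the commutative group generated by the scalars $\xi^\ell\mathcal I$ and the operators $E_{(\mathbf a,\mathbf b)}$, $(\mathbf a|\mathbf b)\in C$, and $\lambda$ is a fixed character of $S$ with $\lambda(\xi\mathcal I)=\xi$. Erasures: let $\epsilon_1=\{X(a)Z(b):a,b\in\mathbb F_q\}$ and $\Gamma(\rho)=q^{-2}\sum_{E\in\epsilon_1}E\rho E^\dagger$ (completely depolarizing channel). For $I\subseteq\{1,\dots,n\}$, $\Gamma^I$ applies $\Gamma$ to the qudits indexed by $I$ and the identity to the others. A quantum code $Q$ corrects erasures at $I$ if there exists a trace-preserving quantum operation $\mathcal R$ with $\mathcal R\circ\Gamma^I(|\varphi\rangle\langle\varphi|)=|\varphi\rangle\langle\varphi|$ for all $|\varphi\rangle\in Q$. *)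

theory Defs
  imports "HOL-Analysis.Analysis"
begin

text \<open>Finite field F_q is modelled by a type 'a of class finite and field;
  q = CARD('a), p = CHAR('a). Coordinates are indexed by 1..n.\<close>

definition fq_vecs :: "nat \<Rightarrow> (nat \<Rightarrow> 'a::zero) set" where
  "fq_vecs n = {a. \<forall>j. j \<notin> {1..n} \<longrightarrow> a j = 0}"

text \<open>Vectors (a|b) of F_q^{2n} as pairs of coordinate functions.\<close>
definition sympl_vecs :: "nat \<Rightarrow> ((nat \<Rightarrow> 'a::zero) \<times> (nat \<Rightarrow> 'a)) set" where
  "sympl_vecs n = fq_vecs n \<times> fq_vecs n"

definition linear_code :: "nat \<Rightarrow> ((nat \<Rightarrow> 'a::field) \<times> (nat \<Rightarrow> 'a)) set \<Rightarrow> bool" where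
  "linear_code n C \<longleftrightarrow> C \<subseteq> sympl_vecs n \<and> (\<lambda>j. 0, \<lambda>j. 0) \<in> C \<and>
     (\<forall>x\<in>C. \<forall>y\<in>C. (\<lambda>j. fst x j + fst y j, \<lambda>j. snd x j + snd y j) \<in> C) \<and>
     (\<forall>c. \<forall>x\<in>C. (\<lambda>j. c * fst x j, \<lambda>j. c * snd x j) \<in> C)"

definition sympl_form :: "nat \<Rightarrow> (nat \<Rightarrow> 'a::field) \<times> (nat \<Rightarrow> 'a) \<Rightarrow> (nat \<Rightarrow> 'a) \<times> (nat \<Rightarrow> 'a) \<Rightarrow> 'a" where
  "sympl_form n x y = (\<Sum>j\<in>{1..n}. fst x j * snd y j) - (\<Sum>j\<in>{1..n}. snd x j * fst y j)"

definition sympl_dual :: "nat \<Rightarrow> ((nat \<Rightarrow> 'a::field) \<times> (nat \<Rightarrow> 'a)) set \<Rightarrow> ((nat \<Rightarrow> 'a) \<times> (nat \<Rightarrow> 'a)) set" where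
  "sympl_dual n C = {y \<in> sympl_vecs n. \<forall>x\<in>C. sympl_form n x y = 0}"

definition sympl_self_orth :: "nat \<Rightarrow> ((nat \<Rightarrow> 'a::field) \<times> (nat \<Rightarrow> 'a)) set \<Rightarrow> bool" where
  "sympl_self_orth n C \<longleftrightarrow> C \<subseteq> sympl_dual n C"

text \<open>Projection pi_R: keep the coordinates in R (others are set to 0, i.e. forgotten).\<close>
definition proj :: "nat set \<Rightarrow> (nat \<Rightarrow> 'a::zero) \<times> (nat \<Rightarrow> 'a) \<Rightarrow> (nat \<Rightarrow> 'a) \<times> (nat \<Rightarrow> 'a)" where
  "proj R y = (\<lambda>j. if j \<in> R then fst y j else 0, \<lambda>j. if j \<in> R then snd y j else 0)"

definition shorten :: "nat set \<Rightarrow> ((nat \<Rightarrow> 'a::zero) \<times> (nat \<Rightarrow> 'a)) set \<Rightarrow> ((nat \<Rightarrow> 'a) \<times> (nat \<Rightarrow> 'a)) set" where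
  "shorten R D = {proj R y | y. y \<in> D \<and> {j. fst y j \<noteq> 0} \<union> {j. snd y j \<noteq> 0} \<subseteq> R}"

definition ext_deg :: "'a::{finite,field} itself \<Rightarrow> nat" where
  "ext_deg T = (THE m. CHAR('a) ^ m = CARD('a))"

definition trace :: "'a::{finite,field} \<Rightarrow> 'a" where
  "trace x = (\<Sum>i<ext_deg TYPE('a). x ^ (CHAR('a) ^ i))"

definition trace_nat :: "'a::{finite,field} \<Rightarrow> nat" where
  "trace_nat x = (THE k. k < CHAR('a) \<and> of_nat k = trace x)"

definition xi :: "'a::{finite,field} itself \<Rightarrow> complex" where
  "xi T = cis (2 * pi / real CHAR('a))"

definition chi :: "'a::{finite,field} \<Rightarrow> complex" where
  "chi x = xi TYPE('a) ^ trace_nat x"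

text \<open>Basis |x> indexed by x in F_q^n; operators are matrices indexed by basis
  vectors (canonically zero outside the basis), vectors are functions on the basis
  (zero outside).\<close>

definition basis_idx :: "nat \<Rightarrow> (nat \<Rightarrow> 'a::zero) set" where
  "basis_idx n = fq_vecs n"

type_synonym 'a qop = "(nat \<Rightarrow> 'a) \<Rightarrow> (nat \<Rightarrow> 'a) \<Rightarrow> complex"
type_synonym 'a qvec = "(nat \<Rightarrow> 'a) \<Rightarrow> complex"

definition canon :: "nat \<Rightarrow> 'a::zero qop \<Rightarrow> 'a qop" where
  "canon n M = (\<lambda>x y. if x \<in> basis_idx n \<and> y \<in> basis_idx n then M x y else 0)"

definition qvecs :: "nat \<Rightarrow> 'a::zero qvec set" where
  "qvecs n = {v. \<forall>x. x \<notin> basis_idx n \<longrightarrow> v x = 0}"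

definition op_mult :: "nat \<Rightarrow> 'a::zero qop \<Rightarrow> 'a qop \<Rightarrow> 'a qop" where
  "op_mult n A B = canon n (\<lambda>x y. \<Sum>z\<in>basis_idx n. A x z * B z y)"

definition op_adj :: "nat \<Rightarrow> 'a::zero qop \<Rightarrow> 'a qop" where
  "op_adj n A = canon n (\<lambda>x y. cnj (A y x))"

definition op_id :: "nat \<Rightarrow> 'a::zero qop" where
  "op_id n = canon n (\<lambda>x y. if x = y then 1 else 0)"

definition op_smult :: "nat \<Rightarrow> complex \<Rightarrow> 'a::zero qop \<Rightarrow> 'a qop" where
  "op_smult n c A = canon n (\<lambda>x y. c * A x y)"

definition op_add :: "nat \<Rightarrow> 'a::zero qop \<Rightarrow> 'a qop \<Rightarrow> 'a qop" where
  "op_add n A B = canon n (\<lambda>x y. A x y + B x y)"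

definition op_apply :: "nat \<Rightarrow> 'a::zero qop \<Rightarrow> 'a qvec \<Rightarrow> 'a qvec" where
  "op_apply n A v = (\<lambda>x. if x \<in> basis_idx n then (\<Sum>y\<in>basis_idx n. A x y * v y) else 0)"

definition outer :: "nat \<Rightarrow> 'a::zero qvec \<Rightarrow> 'a qop" where
  "outer n v = canon n (\<lambda>x y. v x * cnj (v y))"

text \<open>E_(a,b) = tensor_j X(a_j) Z(b_j); X(a)Z(b)|y> = xi^tr(b y) |y + a>, so
  <x| E_(a,b) |y> = [x = y + a] * prod_j xi^tr(b_j y_j).\<close>
definition pauli :: "nat \<Rightarrow> (nat \<Rightarrow> 'a::{finite,field}) \<times> (nat \<Rightarrow> 'a) \<Rightarrow> 'a qop" where
  "pauli n ab = canon n (\<lambda>x y. if x = (\<lambda>j. y j + fst ab j)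
       then (\<Prod>j\<in>{1..n}. chi (snd ab j * y j)) else 0)"

inductive_set stab_group :: "nat \<Rightarrow> ((nat \<Rightarrow> 'a::{finite,field}) \<times> (nat \<Rightarrow> 'a)) set \<Rightarrow> 'a qop set"
  for n C where
  scal: "op_smult n (xi TYPE('a) ^ l) (op_id n) \<in> stab_group n C"
| gen: "c \<in> C \<Longrightarrow> pauli n c \<in> stab_group n C"
| mult: "A \<in> stab_group n C \<Longrightarrow> B \<in> stab_group n C \<Longrightarrow> op_mult n A B \<in> stab_group n C"
| inv: "A \<in> stab_group n C \<Longrightarrow> op_adj n A \<in> stab_group n C"

definition stab_character :: "nat \<Rightarrow> ((nat \<Rightarrow> 'a::{finite,field}) \<times> (nat \<Rightarrow> 'a)) set \<Rightarrow> ('a qop \<Rightarrow> complex) \<Rightarrow> bool" where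
  "stab_character n C lam \<longleftrightarrow>
     (\<forall>A\<in>stab_group n C. lam A \<noteq> 0) \<and>
     (\<forall>A\<in>stab_group n C. \<forall>B\<in>stab_group n C. lam (op_mult n A B) = lam A * lam B) \<and>
     lam (op_smult n (xi TYPE('a)) (op_id n)) = xi TYPE('a)"

definition stab_code :: "nat \<Rightarrow> ((nat \<Rightarrow> 'a::{finite,field}) \<times> (nat \<Rightarrow> 'a)) set \<Rightarrow> ('a qop \<Rightarrow> complex) \<Rightarrow> 'a qvec set" where
  "stab_code n C lam = {v \<in> qvecs n. \<forall>E\<in>stab_group n C. op_apply n E v = (\<lambda>x. lam E * v x)}"

definition pauli_at :: "nat \<Rightarrow> nat \<Rightarrow> 'a::{finite,field} \<Rightarrow> 'a \<Rightarrow> 'a qop" where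
  "pauli_at n j a b = pauli n (\<lambda>k. if k = j then a else 0, \<lambda>k. if k = j then b else 0)"

definition op_sum :: "nat \<Rightarrow> ('i \<Rightarrow> 'a::zero qop) \<Rightarrow> 'i set \<Rightarrow> 'a qop" where
  "op_sum n f S = canon n (\<lambda>x y. \<Sum>i\<in>S. f i x y)"

definition depol_at :: "nat \<Rightarrow> nat \<Rightarrow> 'a::{finite,field} qop \<Rightarrow> 'a qop" where
  "depol_at n j rho = op_smult n (1 / of_nat (CARD('a))^2)
     (op_sum n (\<lambda>(a,b). op_mult n (op_mult n (pauli_at n j a b) rho) (op_adj n (pauli_at n j a b))) UNIV)"

text \<open>Gamma^I: Gamma on each qudit in I (these commute), identity on the others.\<close>
definition erasure_channel :: "nat \<Rightarrow> nat set \<Rightarrow> 'a::{finite,field} qop \<Rightarrow> 'a qop" where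
  "erasure_channel n I rho = foldr (depol_at n) (sorted_list_of_set I) (canon n rho)"

definition kraus_tp :: "nat \<Rightarrow> 'a::zero qop list \<Rightarrow> bool" where
  "kraus_tp n Ks \<longleftrightarrow> op_sum n (\<lambda>i. op_mult n (op_adj n (Ks ! i)) (Ks ! i)) {..<length Ks} = op_id n"

definition kraus_apply :: "nat \<Rightarrow> 'a::zero qop list \<Rightarrow> 'a qop \<Rightarrow> 'a qop" where
  "kraus_apply n Ks rho = op_sum n (\<lambda>i. op_mult n (op_mult n (Ks ! i) rho) (op_adj n (Ks ! i))) {..<length Ks}"

definition corrects_erasures :: "nat \<Rightarrow> 'a::{finite,field} qvec set \<Rightarrow> nat set \<Rightarrow> bool" where
  "corrects_erasures n Q I \<longleftrightarrow>
     (\<exists>Ks. kraus_tp n Ks \<and>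
        (\<forall>\<phi>\<in>Q. kraus_apply n Ks (erasure_channel n I (outer n \<phi>)) = outer n \<phi>))"

end

theory Submission
  imports Defs "HOL-Computational_Algebra.Primes" "HOL-Computational_Algebra.Polynomial"
begin

section \<open>Finite field facts\<close>

lemma prime_CHAR_ff: "prime CHAR('a::{finite,field})"
  by (rule prime_CHAR_semidom) (rule finite_imp_CHAR_pos, simp)

lemma CHAR_ge2: "CHAR('a::{finite,field}) \<ge> 2"
  using prime_CHAR_ff[where 'a='a] prime_ge_2_nat by blast

lemma pow_card_ff:
  fixes x :: "'a::{finite,field}"
  shows "x ^ CARD('a) = x"
proof (cases "x = 0")
  case False
  have "x * (\<Prod>y\<in>UNIV-{0}. x * y) = x * x ^ (card (UNIV :: 'a set) - 1) * \<Prod>(UNIV-{0})"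
    by (simp add: prod.distrib mult_ac)
  also have "x * x ^ (card (UNIV :: 'a set) - 1) = x ^ Suc (card (UNIV :: 'a set) - 1)"
    by (subst power_Suc) auto
  also have "Suc (card (UNIV :: 'a set) - 1) = card (UNIV :: 'a set)"
    using finite_UNIV_card_ge_0[where ?'a = 'a] by simp
  also have "(\<Prod>y\<in>UNIV-{0}. x * y) = (\<Prod>y\<in>UNIV-{0}. y)"
    by (rule prod.reindex_bij_witness[of _ "\<lambda>y. y / x" "\<lambda>y. x * y"]) (use False in auto)
  finally show ?thesis
    by simp
qed (use finite_UNIV_card_ge_0[where ?'a = 'a] in auto)

lemma freshman_ff:
  fixes x y :: "'a::{finite,field}"
  shows "(x + y) ^ (CHAR('a) ^ i) = x ^ (CHAR('a) ^ i) + y ^ (CHAR('a) ^ i)"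
  by (rule freshmans_dream') (auto simp: prime_CHAR_ff)

lemma of_nat_pow_CHAR:
  "(of_nat k :: 'a::{finite,field}) ^ CHAR('a) = of_nat k"
proof (induction k)
  case 0 then show ?case using CHAR_ge2[where 'a='a] by (simp add: power_0_left)
next
  case (Suc k)
  have "(of_nat (Suc k) :: 'a) ^ CHAR('a) = (of_nat k + 1) ^ (CHAR('a) ^ 1)" by (simp add: add.commute)
  also have "\<dots> = of_nat k ^ (CHAR('a) ^ 1) + 1 ^ (CHAR('a) ^ 1)" by (rule freshman_ff)
  finally show ?case using Suc by simp
qed

lemma of_nat_inj_CHAR:
  assumes "i < CHAR('a::{finite,field})" "j < CHAR('a)" "(of_nat i :: 'a) = of_nat j"
  shows "i = j"
proof (rule ccontr)
  assume ne: "i \<noteq> j"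
  { fix i j :: nat assume "i < j" "j < CHAR('a)" "(of_nat i :: 'a) = of_nat j"
    then have "(of_nat (j - i) :: 'a) = 0" by (simp add: of_nat_diff)
    then have "CHAR('a) dvd (j - i)" by (simp add: of_nat_eq_0_iff_char_dvd)
    with \<open>i < j\<close> \<open>j < CHAR('a)\<close> have False
      using dvd_imp_le[of "CHAR('a)" "j - i"] by linarith }
  with assms ne show False by (metis linorder_neqE_nat)
qed

definition addsub :: "'a::{finite,field} set \<Rightarrow> bool" where
  "addsub W \<longleftrightarrow> 0 \<in> W \<and> (\<forall>x\<in>W. \<forall>y\<in>W. x + y \<in> W)"

lemma addsub_ofnat: "addsub W \<Longrightarrow> w \<in> W \<Longrightarrow> of_nat k * w \<in> W"
  by (induction k) (auto simp: addsub_def distrib_right)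

lemma addsub_neg: "addsub W \<Longrightarrow> w \<in> W \<Longrightarrow> - w \<in> W"
proof -
  assume W: "addsub W" "w \<in> W"
  have "of_nat (CHAR('a) - 1) * w + w = of_nat CHAR('a) * w"
    using CHAR_ge2[where 'a='a] by (simp add: of_nat_diff algebra_simps)
  then have "of_nat (CHAR('a) - 1) * w = - w" by (simp add: eq_neg_iff_add_eq_0)
  then have "- w = of_nat (CHAR('a) - 1) * w" by simp
  then show ?thesis using addsub_ofnat[OF W] by simp
qed

lemma addsub_diff: "addsub W \<Longrightarrow> v \<in> W \<Longrightarrow> w \<in> W \<Longrightarrow> v - w \<in> W"
proof -
  assume a: "addsub W" "v \<in> W" "w \<in> W"
  then have "v + (- w) \<in> W" using addsub_neg[of W w] unfolding addsub_def by blast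
  then show ?thesis by simp
qed

lemma of_nat_inverse_in:
  assumes "(of_nat d :: 'a::{finite,field}) \<noteq> 0"
  shows "\<exists>e. inverse (of_nat d :: 'a) = of_nat e"
proof -
  have c2: "CARD('a) \<ge> 2"
  proof -
    have "{0, 1::'a} \<subseteq> UNIV" by simp
    then have "card {0,1::'a} \<le> CARD('a)" by (intro card_mono) auto
    then show ?thesis by simp
  qed
  let ?x = "of_nat d :: 'a"
  obtain c0 where "CARD('a) = 2 + c0" using le_Suc_ex[OF c2] by blast
  then have c: "CARD('a) = Suc (Suc c0)" by simp
  define c where "c = c0" 
  have "?x * (?x ^ c * ?x) = ?x ^ CARD('a)" unfolding c c_def by (simp add: mult_ac)
  also have "\<dots> = ?x * 1" using pow_card_ff by simp
  finally have "?x ^ c * ?x = 1" using assms by simp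
  then have "?x * ?x ^ c = 1" by (simp add: mult.commute)
  then have "inverse ?x = ?x ^ c" by (rule inverse_unique)
  then have "?x ^ c = inverse ?x" by simp
  then show ?thesis by (metis of_nat_power)
qed

lemma card_is_CHAR_power: "\<exists>m. CHAR('a::{finite,field}) ^ m = CARD('a)"
proof -
  let ?p = "CHAR('a)"
  have main: "\<And>W::'a set. addsub W \<Longrightarrow> (\<exists>k. card W = ?p ^ k) \<Longrightarrow> \<exists>m. ?p ^ m = CARD('a)"
  proof -
    fix W :: "'a set"
    show "addsub W \<Longrightarrow> (\<exists>k. card W = ?p ^ k) \<Longrightarrow> \<exists>m. ?p ^ m = CARD('a)"
    proof (induction "CARD('a) - card W" arbitrary: W rule: less_induct)
      case less
      then obtain k where k: "card W = ?p ^ k" by blast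
      show ?case
      proof (cases "W = UNIV")
        case True then show ?thesis using k by auto
      next
        case False
        then obtain x where x: "x \<notin> W" by blast
        define f where "f = (\<lambda>(w, i). w + of_nat i * x)"
        define W' where "W' = f ` (W \<times> {..<?p})"
        have inj: "inj_on f (W \<times> {..<?p})"
        proof (rule inj_onI, clarsimp simp: f_def)
          fix w i w' j
          assume a: "w \<in> W" "i < ?p" "w' \<in> W" "j < ?p" "w + of_nat i * x = w' + of_nat j * x"
          have "i = j"
          proof (rule ccontr)
            assume "i \<noteq> j"
            { fix w i w' j assume b: "w \<in> W" "w' \<in> W" "i < j" "j < ?p" "w + of_nat i * x = w' + of_nat j * x"
              then have "of_nat (j - i) * x = w - w'" by (simp add: of_nat_diff algebra_simps)
              moreover have "(of_nat (j - i) :: 'a) \<noteq> 0"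
              proof
                assume "(of_nat (j - i) :: 'a) = 0"
                then have "?p dvd (j - i)" by (simp add: of_nat_eq_0_iff_char_dvd)
                then show False using b(3,4) dvd_imp_le[of "?p" "j - i"] by linarith
              qed
              moreover obtain e where "inverse (of_nat (j - i) :: 'a) = of_nat e"
                using of_nat_inverse_in calculation(2) by blast
              ultimately have "x = of_nat e * (w - w')"
                by (metis mult.assoc mult.left_neutral left_inverse)
              then have "x \<in> W" using addsub_ofnat[OF less.prems(1) addsub_diff[OF less.prems(1) b(1,2)]] by simp
              with x have False by simp }
            then show False using a \<open>i \<noteq> j\<close> by (metis linorder_neqE_nat)
          qed
          then show "w = w' \<and> i = j" using a by simp
        qed
        have cW': "card W' = ?p ^ Suc k"
          unfolding W'_def using card_image[OF inj] k by (simp add: card_cartesian_product)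
        have sub: "addsub W'"
          unfolding addsub_def
        proof (intro conjI ballI)
          have "f (0,0) = 0" by (simp add: f_def)
          moreover have "(0,0) \<in> W \<times> {..<?p}" using less.prems(1) CHAR_ge2[where 'a='a]
            by (auto simp: addsub_def)
          ultimately show "0 \<in> W'" unfolding W'_def by (metis image_eqI)
          fix y z assume "y \<in> W'" "z \<in> W'"
          then obtain w i w' j where y: "y = w + of_nat i * x" "w \<in> W" "i < ?p"
              and z: "z = w' + of_nat j * x" "w' \<in> W" "j < ?p"
            unfolding W'_def f_def by auto
          have "(of_nat (i + j) :: 'a) = of_nat ((i + j) mod ?p + ?p * ((i + j) div ?p))"
            by (simp only: mod_mult_div_eq)
          also have "\<dots> = of_nat ((i + j) mod ?p)" by (simp only: of_nat_add of_nat_mult of_nat_CHAR mult_zero_left add_0_right)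
          finally have ij: "(of_nat (i + j) :: 'a) = of_nat ((i + j) mod ?p)" .
          have "y + z = (w + w') + of_nat (i + j) * x" using y z by (simp add: algebra_simps)
          then have "y + z = (w + w') + of_nat ((i + j) mod ?p) * x" by (simp only: ij)
          moreover have "w + w' \<in> W" using less.prems(1) y z by (simp add: addsub_def)
          moreover have "(i + j) mod ?p < ?p" using CHAR_ge2[where 'a='a] by simp
          ultimately show "y + z \<in> W'" unfolding W'_def f_def by (auto simp: image_iff)
        qed
        have "card W' \<le> CARD('a)" by (rule card_mono) auto
        moreover have "card W < card W'" using cW' k CHAR_ge2[where 'a='a] by simp
        ultimately have "CARD('a) - card W' < CARD('a) - card W" by linarith
        from less.hyps[OF this sub] cW' show ?thesis by blast
      qed
    qed
  qed
  have "addsub {0::'a}" by (simp add: addsub_def)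
  moreover have "card {0::'a} = ?p ^ 0" by simp
  ultimately show ?thesis using main by blast
qed


lemma ext_deg_eq: "CHAR('a::{finite,field}) ^ ext_deg TYPE('a) = CARD('a)"
proof -
  obtain m where m: "CHAR('a) ^ m = CARD('a)" using card_is_CHAR_power by blast
  have "\<exists>!m. CHAR('a) ^ m = CARD('a)"
  proof (rule ex1I[of _ m])
    show "CHAR('a) ^ m = CARD('a)" by (rule m)
    fix m' assume "CHAR('a) ^ m' = CARD('a)"
    with m have "CHAR('a) ^ m' = CHAR('a) ^ m" by simp
    then show "m' = m" using CHAR_ge2[where 'a='a] by simp
  qed
  then show ?thesis unfolding ext_deg_def by (rule theI')
qed

lemma CARD_ge2: "CARD('a::{finite,field}) \<ge> 2"
proof -
  have "{0, 1::'a} \<subseteq> UNIV" by simp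
  then have "card {0,1::'a} \<le> CARD('a)" by (intro card_mono) auto
  then show ?thesis by simp
qed

lemma ext_deg_pos: "ext_deg TYPE('a::{finite,field}) > 0"
proof (rule ccontr)
  assume "\<not> ext_deg TYPE('a) > 0"
  then have "CARD('a) = 1" using ext_deg_eq[where 'a='a] by simp
  then show False using CARD_ge2[where 'a='a] by simp
qed

lemma trace_add: "trace (x + y) = trace x + trace (y::'a::{finite,field})"
  unfolding trace_def by (simp add: freshman_ff sum.distrib)

lemma trace_0: "trace (0::'a::{finite,field}) = 0"
  unfolding trace_def using CHAR_ge2[where 'a='a] by (simp add: power_0_left)

lemma trace_pow: "trace x ^ CHAR('a) = trace (x::'a::{finite,field})"
proof -
  let ?p = "CHAR('a)"
  obtain k where k: "ext_deg TYPE('a) = Suc k" using ext_deg_pos[where 'a='a] by (metis gr0_implies_Suc)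
  define f where "f = (\<lambda>i. x ^ (?p ^ i))"
  have "trace x ^ ?p = (\<Sum>i<Suc k. f i ^ ?p)"
    unfolding trace_def k f_def by (rule freshmans_dream_sum) (auto simp: prime_CHAR_ff)
  also have "\<dots> = (\<Sum>i<Suc k. f (Suc i))"
    by (simp add: f_def power_mult[symmetric] mult.commute)
  also have "\<dots> = (\<Sum>i<k. f (Suc i)) + f (Suc k)" by simp
  also have "f (Suc k) = f 0"
    using ext_deg_eq[where 'a='a] pow_card_ff[of x] unfolding f_def k by simp
  also have "(\<Sum>i<k. f (Suc i)) + f 0 = (\<Sum>i<Suc k. f i)"
    by (simp only: sum.lessThan_Suc_shift add.commute)
  finally show ?thesis unfolding trace_def k f_def .
qed

lemma fixed_prime_field:
  fixes y :: "'a::{finite,field}"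
  assumes "y ^ CHAR('a) = y"
  shows "\<exists>k<CHAR('a). of_nat k = y"
proof -
  let ?p = "CHAR('a)"
  define pp :: "'a poly" where "pp = monom 1 ?p - monom 1 1"
  have poly_pp: "poly pp z = z ^ ?p - z" for z by (simp add: pp_def poly_monom)
  have "coeff pp ?p = 1" using CHAR_ge2[where 'a='a] by (simp add: pp_def)
  then have pp0: "pp \<noteq> 0" by auto
  have "degree pp \<le> ?p" unfolding pp_def
    by (rule degree_diff_le) (use CHAR_ge2[where 'a='a] in \<open>auto intro: order.trans[OF degree_monom_le]\<close>)
  then have card_le: "card {z. poly pp z = 0} \<le> ?p" using card_poly_roots_bound[OF pp0] by linarith
  have sub: "of_nat ` {..<?p} \<subseteq> {z::'a. poly pp z = 0}"
    by (auto simp: poly_pp of_nat_pow_CHAR)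
  have inj: "inj_on (of_nat :: nat \<Rightarrow> 'a) {..<?p}"
    by (rule inj_onI) (auto intro: of_nat_inj_CHAR)
  have "card (of_nat ` {..<?p} :: 'a set) = ?p" using card_image[OF inj] by simp
  then have eq: "of_nat ` {..<?p} = {z::'a. poly pp z = 0}"
    using card_le sub card_mono[OF poly_roots_finite[OF pp0] sub]
    by (intro card_subset_eq) (auto intro: poly_roots_finite[OF pp0])
  have "y \<in> {z. poly pp z = 0}" using assms by (simp add: poly_pp)
  then show ?thesis unfolding eq[symmetric] by auto
qed

lemma trace_nat_spec:
  fixes x :: "'a::{finite,field}"
  shows "trace_nat x < CHAR('a) \<and> of_nat (trace_nat x) = trace x"
proof -
  have "\<exists>!k. k < CHAR('a) \<and> (of_nat k :: 'a) = trace x"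
    using fixed_prime_field[OF trace_pow[of x]] of_nat_inj_CHAR[where 'a='a] by metis
  then show ?thesis unfolding trace_nat_def by (rule theI')
qed

lemma trace_nat_unique:
  fixes x :: "'a::{finite,field}"
  assumes "k < CHAR('a)" "of_nat k = trace x"
  shows "trace_nat x = k"
  using trace_nat_spec[of x] assms of_nat_inj_CHAR[where 'a='a] by metis

lemma xi_def': "xi TYPE('a::{finite,field}) = cis (2 * pi / real CHAR('a))"
  by (simp add: xi_def)

lemma xi_pow_CHAR: "xi TYPE('a::{finite,field}) ^ CHAR('a) = 1"
  unfolding xi_def Complex.DeMoivre using CHAR_ge2[where 'a='a] by simp

lemma xi_pow_mod: "xi TYPE('a::{finite,field}) ^ (a mod CHAR('a)) = xi TYPE('a) ^ a"
proof -
  have "xi TYPE('a) ^ a = xi TYPE('a) ^ (a mod CHAR('a) + CHAR('a) * (a div CHAR('a)))"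
    by simp
  also have "\<dots> = xi TYPE('a) ^ (a mod CHAR('a))"
    by (simp only: power_add power_mult xi_pow_CHAR power_one mult_1_right)
  finally show ?thesis by simp
qed

lemma of_nat_mod_CHAR': "(of_nat (a mod CHAR('a)) :: 'a::{finite,field}) = of_nat a"
proof -
  have "(of_nat a :: 'a) = of_nat (a mod CHAR('a) + CHAR('a) * (a div CHAR('a)))"
    by (simp only: mod_mult_div_eq)
  also have "\<dots> = of_nat (a mod CHAR('a))"
    by (simp only: of_nat_add of_nat_mult of_nat_CHAR mult_zero_left add_0_right)
  finally show ?thesis by simp
qed

lemma chi_add: "chi (x + y) = chi x * chi (y::'a::{finite,field})"
proof -
  have p0: "CHAR('a) > 0" using CHAR_ge2[where 'a='a] by simp
  have "trace_nat (x + y) = (trace_nat x + trace_nat y) mod CHAR('a)"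
    apply (rule trace_nat_unique)
    using p0 apply simp
    by (simp add: of_nat_mod_CHAR' trace_add trace_nat_spec)
  then show ?thesis unfolding chi_def by (simp add: xi_pow_mod power_add)
qed

lemma chi_0: "chi (0::'a::{finite,field}) = 1"
proof -
  have "trace_nat (0::'a) = 0"
    by (rule trace_nat_unique) (use CHAR_ge2[where 'a='a] in \<open>auto simp: trace_0\<close>)
  then show ?thesis by (simp add: chi_def)
qed

lemma chi_cis: "chi (x::'a::{finite,field}) = cis (real (trace_nat x) * (2 * pi / real CHAR('a)))"
  unfolding chi_def xi_def by (rule Complex.DeMoivre)

lemma norm_chi [simp]: "norm (chi x) = 1"
  by (simp add: chi_cis)

lemma chi_nonzero [simp]: "chi x \<noteq> 0"
  by (simp add: chi_cis)

lemma cnj_chi_mult [simp]: "cnj (chi x) * chi x = 1"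
  by (simp add: chi_cis cis_cnj cis_mult)

lemma chi_mult_cnj [simp]: "chi x * cnj (chi x) = 1"
  by (simp add: chi_cis cis_cnj cis_mult)

lemma chi_neg: "chi (- x) = cnj (chi (x::'a::{finite,field}))"
proof -
  have "chi (- x + x) = chi (- x) * chi x" by (rule chi_add)
  then have "chi (- x) * chi x = 1" using chi_0 by (metis add.left_inverse)
  then show ?thesis using cnj_chi_mult[of x] by (metis chi_nonzero mult_cancel_right)
qed

lemma chi_diff: "chi (x - y) = chi x * cnj (chi (y::'a::{finite,field}))"
  using chi_add[of x "-y"] chi_neg[of y] by simp

lemma chi_sum: "chi (\<Sum>i\<in>A. f i) = (\<Prod>i\<in>A. chi (f i :: 'a::{finite,field}))"
  by (induction A rule: infinite_finite_induct) (auto simp: chi_0 chi_add)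

lemma chi_xi_pow: "\<exists>l. chi x = xi TYPE('a) ^ l" for x :: "'a::{finite,field}"
  unfolding chi_def by blast

lemma trace_nonzero: "\<exists>s::'a::{finite,field}. trace s \<noteq> 0"
proof -
  let ?p = "CHAR('a)" and ?m = "ext_deg TYPE('a)"
  define tp :: "'a poly" where "tp = (\<Sum>i<?m. monom 1 (?p ^ i))"
  have poly_tp: "poly tp z = trace z" for z by (simp add: tp_def poly_sum poly_monom trace_def)
  have "coeff tp (?p ^ (?m - 1)) = (\<Sum>i<?m. if i = ?m - 1 then 1 else 0)"
    unfolding tp_def coeff_sum coeff_monom using CHAR_ge2[where 'a='a] by simp
  also have "\<dots> = 1" using ext_deg_pos[where 'a='a] by simp
  finally have tp0: "tp \<noteq> 0" by auto
  have "degree tp \<le> ?p ^ (?m - 1)" unfolding tp_def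
    by (rule degree_sum_le) (use CHAR_ge2[where 'a='a] in \<open>auto intro!: order.trans[OF degree_monom_le] power_increasing\<close>)
  then have "card {z. poly tp z = 0} \<le> ?p ^ (?m - 1)" using card_poly_roots_bound[OF tp0] by linarith
  also have "\<dots> < ?p ^ ?m" using CHAR_ge2[where 'a='a] ext_deg_pos[where 'a='a] by (intro power_strict_increasing) auto
  also have "\<dots> = card (UNIV :: 'a set)" using ext_deg_eq by simp
  finally have "{z. poly tp z = 0} \<noteq> UNIV" by auto
  then show ?thesis by (auto simp: poly_tp)
qed

lemma chi_nontrivial: "\<exists>s::'a::{finite,field}. chi s \<noteq> 1"
proof -
  obtain s :: 'a where s: "trace s \<noteq> 0" using trace_nonzero by blast
  let ?k = "trace_nat s" and ?p = "CHAR('a)"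
  have k: "?k < ?p" "?k \<noteq> 0"
  proof -
    show "?k < ?p" using trace_nat_spec[of s] by simp
    show "?k \<noteq> 0"
    proof
      assume "?k = 0"
      then have "trace s = 0" using trace_nat_spec[of s] by simp
      with s show False by simp
    qed
  qed
  have "chi s \<noteq> 1"
  proof
    assume "chi s = 1"
    then have "cos (real ?k * (2 * pi / real ?p)) = 1"
      unfolding chi_cis by (metis Re_complex_of_real cis.sel(1) one_complex.sel(1))
    then obtain n :: int where n: "real ?k * (2 * pi / real ?p) = real_of_int n * 2 * pi"
      using cos_one_2pi_int by meson
    have p0: "real ?p > 0" using CHAR_ge2[where 'a='a] by simp
    from n have "real ?k = n * real ?p" using p0 by (simp add: field_simps)
    then have "int ?k = n * int ?p" by (metis of_int_eq_iff of_int_mult of_int_of_nat_eq)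
    moreover have "0 < int ?k" "int ?k < int ?p" using k by auto
    ultimately show False
    proof (cases "n \<le> 0")
      case True
      then have "n * int ?p \<le> 0" by (simp add: mult_nonpos_nonneg)
      then show False using \<open>int ?k = n * int ?p\<close> \<open>0 < int ?k\<close> by linarith
    next
      case False
      then have "1 * int ?p \<le> n * int ?p" by (intro mult_right_mono) auto
      then show False using \<open>int ?k = n * int ?p\<close> \<open>int ?k < int ?p\<close> by linarith
    qed
  qed
  then show ?thesis by blast
qed


section \<open>Operator algebra\<close>

lemma finite_fq_vecs: "finite (fq_vecs n :: (nat \<Rightarrow> 'a::{finite,zero}) set)"
proof -
  have "fq_vecs n = {f :: nat \<Rightarrow> 'a. \<forall>x. (x \<in> {1..n} \<longrightarrow> f x \<in> UNIV) \<and> (x \<notin> {1..n} \<longrightarrow> f x = 0)}"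
    by (auto simp: fq_vecs_def)
  then show ?thesis using finite_set_of_finite_funs[of "{1..n}" "UNIV :: 'a set" 0] by simp
qed

lemma finite_basis: "finite (basis_idx n :: (nat \<Rightarrow> 'a::{finite,zero}) set)"
  by (simp add: basis_idx_def finite_fq_vecs)

definition cop :: "nat \<Rightarrow> 'a::zero qop \<Rightarrow> bool" where
  "cop n A \<longleftrightarrow> canon n A = A"

lemma canon_apply: "canon n M x y = (if x \<in> basis_idx n \<and> y \<in> basis_idx n then M x y else 0)"
  by (simp add: canon_def)

lemmas op_defs = op_mult_def op_adj_def op_id_def op_smult_def op_add_def op_sum_def canon_def

lemma cop_canon [simp]: "cop n (canon n A)" by (auto simp: cop_def canon_def fun_eq_iff)
lemma cop_mult [simp]: "cop n (op_mult n A B)" by (simp add: op_mult_def)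
lemma cop_adj [simp]: "cop n (op_adj n A)" by (simp add: op_adj_def)
lemma cop_id [simp]: "cop n (op_id n)" by (simp add: op_id_def)
lemma cop_smult [simp]: "cop n (op_smult n c A)" by (simp add: op_smult_def)
lemma cop_add [simp]: "cop n (op_add n A B)" by (simp add: op_add_def)
lemma cop_sum [simp]: "cop n (op_sum n f S)" by (simp add: op_sum_def)
lemma cop_pauli [simp]: "cop n (pauli n u)" by (simp add: pauli_def)

lemma cop_canon_eq [simp]: "cop n A \<Longrightarrow> canon n A = A" by (simp add: cop_def)

lemma cop_out: "cop n A \<Longrightarrow> x \<notin> basis_idx n \<or> y \<notin> basis_idx n \<Longrightarrow> A x y = 0"
  unfolding cop_def by (metis canon_apply)

lemma op_eqI:
  assumes "cop n A" "cop n B" "\<And>x y. x \<in> basis_idx n \<Longrightarrow> y \<in> basis_idx n \<Longrightarrow> A x y = B x y"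
  shows "A = B"
proof (intro ext)
  fix x y show "A x y = B x y"
  proof (cases "x \<in> basis_idx n \<and> y \<in> basis_idx n")
    case True then show ?thesis using assms(3) by blast
  next
    case False then show ?thesis using cop_out[OF assms(1), of x y] cop_out[OF assms(2), of x y] by auto
  qed
qed

lemma canon_canon [simp]: "canon n (canon n A) = canon n A" by (simp add: canon_def fun_eq_iff)

lemma mult_canon_left [simp]: "op_mult n (canon n A) B = op_mult n A B"
  by (simp add: op_defs fun_eq_iff)
lemma mult_canon_right [simp]: "op_mult n A (canon n B) = op_mult n A B"
  by (auto simp: op_defs fun_eq_iff intro!: sum.cong)
lemma adj_canon [simp]: "op_adj n (canon n A) = op_adj n A"
  by (simp add: op_defs fun_eq_iff)
lemma smult_canon [simp]: "op_smult n c (canon n A) = op_smult n c A"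
  by (simp add: op_defs fun_eq_iff)

lemma mult_assoc: "op_mult n (op_mult n A B) C = op_mult n A (op_mult n B C)"
  by (auto simp: op_defs fun_eq_iff sum_distrib_left sum_distrib_right mult.assoc intro: sum.swap)

lemma adj_mult: "op_adj n (op_mult n A B) = op_mult n (op_adj n B) (op_adj n A)"
  by (auto simp: op_defs fun_eq_iff mult.commute intro!: sum.cong)

lemma adj_adj [simp]: "op_adj n (op_adj n A) = canon n A"
  by (simp add: op_defs fun_eq_iff)

lemma mult_id_left [simp]: "op_mult n (op_id n) A = canon n (A :: 'a::{finite,zero} qop)"
proof (intro ext)
  fix x y
  have "(\<Sum>z\<in>basis_idx n. (if x = z then 1 else 0) * A z y) = (\<Sum>z\<in>basis_idx n. if x = z then A z y else 0)"
    by (intro sum.cong) auto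
  also have "\<dots> = (if x \<in> basis_idx n then A x y else 0)"
    using finite_basis[where 'a='a] by (simp add: sum.delta)
  finally show "op_mult n (op_id n) A x y = canon n A x y"
    by (simp add: op_mult_def op_id_def canon_def cong: if_cong)
qed
lemma mult_id_right [simp]: "op_mult n A (op_id n) = canon n (A :: 'a::{finite,zero} qop)"
proof (intro ext)
  fix x y
  have "(\<Sum>z\<in>basis_idx n. A x z * (if z = y then 1 else 0)) = (\<Sum>z\<in>basis_idx n. if z = y then A x z else 0)"
    by (intro sum.cong) auto
  also have "\<dots> = (if y \<in> basis_idx n then A x y else 0)"
    using finite_basis[where 'a='a] by (simp add: sum.delta')
  finally show "op_mult n A (op_id n) x y = canon n A x y"
    by (simp add: op_mult_def op_id_def canon_def cong: if_cong)
qed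

lemma adj_id [simp]: "op_adj n (op_id n) = op_id n"
  by (auto simp: op_defs fun_eq_iff)

lemma mult_smult_left: "op_mult n (op_smult n c A) B = op_smult n c (op_mult n A B)"
  by (auto simp: op_defs fun_eq_iff sum_distrib_left mult.assoc intro!: sum.cong)
lemma mult_smult_right: "op_mult n A (op_smult n c B) = op_smult n c (op_mult n A B)"
  by (auto simp: op_defs fun_eq_iff sum_distrib_left mult.assoc mult.left_commute intro!: sum.cong)
lemma smult_smult [simp]: "op_smult n c (op_smult n d A) = op_smult n (c * d) A"
  by (auto simp: op_defs fun_eq_iff)
lemma adj_smult: "op_adj n (op_smult n c A) = op_smult n (cnj c) (op_adj n A)"
  by (auto simp: op_defs fun_eq_iff)
lemma smult_one [simp]: "op_smult n 1 A = canon n A"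
  by (auto simp: op_defs fun_eq_iff)
lemma smult_zero [simp]: "op_smult n 0 A = (\<lambda>x y. 0)"
  by (auto simp: op_defs fun_eq_iff)
lemma mult_zeroop_left [simp]: "op_mult n (\<lambda>x y. 0) A = (\<lambda>x y. 0)"
  by (auto simp: op_defs fun_eq_iff)
lemma mult_zeroop_right [simp]: "op_mult n A (\<lambda>x y. 0) = (\<lambda>x y. 0)"
  by (auto simp: op_defs fun_eq_iff)
lemma adj_zero [simp]: "op_adj n (\<lambda>x y. 0) = (\<lambda>x y. 0)"
  by (auto simp: op_defs fun_eq_iff)
lemma cop_zero [simp]: "cop n (\<lambda>x y. 0)"
  by (auto simp: cop_def canon_def fun_eq_iff)

lemma mult_sum_right: "op_mult n A (op_sum n f S) = op_sum n (\<lambda>i. op_mult n A (f i)) S"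
  by (auto simp: op_defs fun_eq_iff sum_distrib_left intro!: sum.cong intro: sum.swap)
lemma mult_sum_left: "op_mult n (op_sum n f S) A = op_sum n (\<lambda>i. op_mult n (f i) A) S"
  by (auto simp: op_defs fun_eq_iff sum_distrib_right intro!: sum.cong intro: sum.swap)
lemma adj_sum: "op_adj n (op_sum n f S) = op_sum n (\<lambda>i. op_adj n (f i)) S"
  by (auto simp: op_defs fun_eq_iff)
lemma smult_sum: "op_smult n c (op_sum n f S) = op_sum n (\<lambda>i. op_smult n c (f i)) S"
  by (auto simp: op_defs fun_eq_iff sum_distrib_left)
lemma sum_smult_const: "op_sum n (\<lambda>i. op_smult n (g i) A) S = op_smult n (sum g S) A"
  by (auto simp: op_defs fun_eq_iff sum_distrib_right)
lemma sum_canon: "op_sum n (\<lambda>i. canon n (f i)) S = op_sum n f S"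
  by (auto simp: op_defs fun_eq_iff)

lemma op_sum_cong: "(\<And>i. i \<in> S \<Longrightarrow> f i = g i) \<Longrightarrow> op_sum n f S = op_sum n g S"
  by (auto simp: op_defs fun_eq_iff intro!: sum.cong)

lemma op_sum_reindex_bij:
  assumes "bij_betw h S T"
  shows "op_sum n (\<lambda>i. f (h i)) S = op_sum n f T"
proof -
  have "\<And>x y. (\<Sum>i\<in>S. f (h i) x y) = (\<Sum>j\<in>T. f j x y)"
    by (rule sum.reindex_bij_betw[OF assms])
  then show ?thesis by (auto simp: op_defs fun_eq_iff)
qed

lemma op_sum_Sigma:
  assumes "finite A" "\<And>a. a \<in> A \<Longrightarrow> finite (B a)"
  shows "op_sum n (\<lambda>a. op_sum n (f a) (B a)) A = op_sum n (\<lambda>p. f (fst p) (snd p)) (Sigma A B)"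
  using assms by (auto simp: op_defs fun_eq_iff sum.Sigma split_def)

lemma op_sum_swap:
  "op_sum n (\<lambda>a. op_sum n (f a) B) A = op_sum n (\<lambda>b. op_sum n (\<lambda>a. f a b) A) B"
  by (auto simp: op_defs fun_eq_iff intro: sum.swap)

lemma op_sum_empty [simp]: "op_sum n f {} = (\<lambda>x y. 0)"
  by (auto simp: op_defs fun_eq_iff)

lemma op_sum_insert:
  "finite S \<Longrightarrow> i \<notin> S \<Longrightarrow> op_sum n f (insert i S) = op_add n (f i) (op_sum n f S)"
  by (auto simp: op_defs fun_eq_iff)

lemma op_sum_zero: "(\<And>i. i \<in> S \<Longrightarrow> f i = (\<lambda>x y. 0)) \<Longrightarrow> op_sum n f S = (\<lambda>x y. 0)"
  by (auto simp: op_defs fun_eq_iff)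

lemma add_canon_left [simp]: "op_add n (canon n A) B = op_add n A B"
  by (auto simp: op_defs fun_eq_iff)
lemma add_canon_right [simp]: "op_add n A (canon n B) = op_add n A B"
  by (auto simp: op_defs fun_eq_iff)
lemma add_zero_right [simp]: "op_add n A (\<lambda>x y. 0) = canon n A"
  by (auto simp: op_defs fun_eq_iff)
lemma add_zero_left [simp]: "op_add n (\<lambda>x y. 0) A = canon n A"
  by (auto simp: op_defs fun_eq_iff)
lemma mult_add_left: "op_mult n (op_add n A B) C = op_add n (op_mult n A C) (op_mult n B C)"
  by (auto simp: op_defs fun_eq_iff distrib_right sum.distrib intro!: sum.cong)
lemma mult_add_right: "op_mult n A (op_add n B C) = op_add n (op_mult n A B) (op_mult n A C)"
  by (auto simp: op_defs fun_eq_iff distrib_left sum.distrib intro!: sum.cong)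
lemma adj_add: "op_adj n (op_add n A B) = op_add n (op_adj n A) (op_adj n B)"
  by (auto simp: op_defs fun_eq_iff)

definition cj :: "nat \<Rightarrow> 'a::zero qop \<Rightarrow> 'a qop \<Rightarrow> 'a qop" where
  "cj n E X = op_mult n (op_mult n E X) (op_adj n E)"

lemma cop_cj [simp]: "cop n (cj n E X)" by (simp add: cj_def)

lemma cj_mult: "cj n (op_mult n A B) X = cj n A (cj n B X)"
  by (simp add: cj_def mult_assoc adj_mult)

lemma cj_smult: "cj n (op_smult n c A) X = op_smult n (c * cnj c) (cj n A X)"
  by (simp add: cj_def adj_smult mult_smult_left mult_smult_right mult.commute)

lemma cj_smultX: "cj n E (op_smult n c X) = op_smult n c (cj n E X)"
  by (simp add: cj_def mult_smult_left mult_smult_right)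

lemma cj_sum: "cj n E (op_sum n f S) = op_sum n (\<lambda>i. cj n E (f i)) S"
  by (simp add: cj_def mult_sum_left mult_sum_right)

lemma cj_canon [simp]: "cj n E (canon n X) = cj n E X"
  by (simp add: cj_def)

lemma cj_canon_E [simp]: "cj n (canon n E) X = cj n E X"
  by (simp add: cj_def)

lemma cj_id [simp]: "cj n (op_id n) X = canon n (X :: 'a::{finite,zero} qop)"
  by (simp add: cj_def)

lemma cj_zero [simp]: "cj n E (\<lambda>x y. 0) = (\<lambda>x y. 0)"
  by (simp add: cj_def)

lemma apply_mult: "op_apply n (op_mult n A B) v = op_apply n A (op_apply n B v)"
  by (auto simp: op_apply_def op_defs fun_eq_iff sum_distrib_left sum_distrib_right mult.assoc intro: sum.swap)

lemma apply_smult: "op_apply n (op_smult n c A) v = (\<lambda>x. c * op_apply n A v x)"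
  by (auto simp: op_apply_def op_defs fun_eq_iff sum_distrib_left mult.assoc intro!: sum.cong)

lemma apply_canon [simp]: "op_apply n (canon n A) v = op_apply n A v"
  by (auto simp: op_apply_def op_defs fun_eq_iff intro!: sum.cong)

lemma apply_in_qvecs [simp]: "op_apply n A v \<in> qvecs n"
  by (simp add: op_apply_def qvecs_def)

lemma apply_id: "v \<in> qvecs n \<Longrightarrow> op_apply n (op_id n) v = (v :: 'a::{finite,zero} qvec)"
proof (intro ext)
  fix x assume v: "v \<in> qvecs n"
  have "(\<Sum>z\<in>basis_idx n. (if x = z then 1 else 0) * v z) = (\<Sum>z\<in>basis_idx n. if x = z then v z else 0)"
    by (intro sum.cong) auto
  also have "\<dots> = (if x \<in> basis_idx n then v x else 0)"
    using finite_basis[where 'a='a] by (simp add: sum.delta)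
  finally show "op_apply n (op_id n) v x = v x"
    using v by (simp add: op_apply_def op_id_def canon_def qvecs_def cong: if_cong)
qed

definition tr :: "nat \<Rightarrow> 'a::zero qop \<Rightarrow> complex" where
  "tr n A = (\<Sum>x\<in>basis_idx n. A x x)"

lemma tr_smult: "tr n (op_smult n c A) = c * tr n A"
  by (simp add: tr_def op_defs sum_distrib_left)

lemma tr_sum: "tr n (op_sum n f S) = (\<Sum>i\<in>S. tr n (f i))"
  by (simp add: tr_def op_defs sum.swap[of _ S])

lemma tr_canon [simp]: "tr n (canon n A) = tr n A"
  by (simp add: tr_def canon_def)

lemma tr_id: "tr n (op_id n :: 'a::zero qop) = of_nat (card (basis_idx n :: (nat \<Rightarrow> 'a) set))"
  by (simp add: tr_def op_defs)


definition vadd :: "(nat \<Rightarrow> 'a::ab_group_add) \<times> (nat \<Rightarrow> 'a) \<Rightarrow> (nat \<Rightarrow> 'a) \<times> (nat \<Rightarrow> 'a) \<Rightarrow> (nat \<Rightarrow> 'a) \<times> (nat \<Rightarrow> 'a)" where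
  "vadd u v = (\<lambda>j. fst u j + fst v j, \<lambda>j. snd u j + snd v j)"
definition vsub :: "(nat \<Rightarrow> 'a::ab_group_add) \<times> (nat \<Rightarrow> 'a) \<Rightarrow> (nat \<Rightarrow> 'a) \<times> (nat \<Rightarrow> 'a) \<Rightarrow> (nat \<Rightarrow> 'a) \<times> (nat \<Rightarrow> 'a)" where
  "vsub u v = (\<lambda>j. fst u j - fst v j, \<lambda>j. snd u j - snd v j)"
definition vzero :: "(nat \<Rightarrow> 'a::zero) \<times> (nat \<Rightarrow> 'a)" where
  "vzero = (\<lambda>j. 0, \<lambda>j. 0)"
definition vsmul :: "'a::field \<Rightarrow> (nat \<Rightarrow> 'a) \<times> (nat \<Rightarrow> 'a) \<Rightarrow> (nat \<Rightarrow> 'a) \<times> (nat \<Rightarrow> 'a)" where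
  "vsmul c u = (\<lambda>j. c * fst u j, \<lambda>j. c * snd u j)"

lemma fq_vecs_add: "a \<in> fq_vecs n \<Longrightarrow> b \<in> fq_vecs n \<Longrightarrow> (\<lambda>j. a j + b j :: 'a::monoid_add) \<in> fq_vecs n"
  by (auto simp: fq_vecs_def)
lemma fq_vecs_sub: "a \<in> fq_vecs n \<Longrightarrow> b \<in> fq_vecs n \<Longrightarrow> (\<lambda>j. a j - b j :: 'a::ab_group_add) \<in> fq_vecs n"
  by (simp add: fq_vecs_def)
lemma fq_vecs_zero [simp]: "(\<lambda>j. 0) \<in> fq_vecs n"
  by (simp add: fq_vecs_def)

lemma V_vadd [simp]: "u \<in> sympl_vecs n \<Longrightarrow> v \<in> sympl_vecs n \<Longrightarrow> vadd u v \<in> sympl_vecs n"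
  by (auto simp: sympl_vecs_def vadd_def fq_vecs_def)
lemma V_vsub [simp]: "u \<in> sympl_vecs n \<Longrightarrow> v \<in> sympl_vecs n \<Longrightarrow> vsub u v \<in> sympl_vecs (n::nat)"
  by (auto simp: sympl_vecs_def vsub_def fq_vecs_def)
lemma V_vzero [simp]: "vzero \<in> sympl_vecs n"
  by (auto simp: sympl_vecs_def vzero_def fq_vecs_def)
lemma V_vsmul [simp]: "u \<in> sympl_vecs n \<Longrightarrow> vsmul c u \<in> sympl_vecs n"
  by (auto simp: sympl_vecs_def vsmul_def fq_vecs_def)

lemma vadd_vsub [simp]: "vadd u (vsub v u) = v"
  by (simp add: vadd_def vsub_def)
lemma vsub_vadd [simp]: "vsub (vadd u v) u = v"
  by (simp add: vadd_def vsub_def)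
lemma vadd_comm: "vadd u v = vadd v u"
  by (simp add: vadd_def add.commute)
lemma vsub_self [simp]: "vsub u u = vzero"
  by (simp add: vsub_def vzero_def)
lemma vsub_eq_zero: "vsub u v = vzero \<longleftrightarrow> u = v"
  by (auto simp: vsub_def vzero_def fun_eq_iff prod_eq_iff)

definition dot :: "nat \<Rightarrow> (nat \<Rightarrow> 'a::comm_ring) \<Rightarrow> (nat \<Rightarrow> 'a) \<Rightarrow> 'a" where
  "dot n a b = (\<Sum>j\<in>{1..n}. a j * b j)"

lemma dot_comm: "dot n a b = dot n b a"
  by (simp add: dot_def mult.commute)
lemma dot_add_right: "dot n a (\<lambda>j. b j + c j) = dot n a b + dot n a c"
  by (simp add: dot_def distrib_left sum.distrib)
lemma dot_add_left: "dot n (\<lambda>j. b j + c j) a = dot n b a + dot n c a"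
  by (simp add: dot_def distrib_right sum.distrib)
lemma dot_sub_right: "dot n a (\<lambda>j. b j - c j) = dot n a b - dot n a c"
  by (simp add: dot_def right_diff_distrib sum_subtractf)
lemma dot_smul_left: "dot n (\<lambda>j. c * b j) a = c * dot n b (a::nat\<Rightarrow>'a::comm_ring)"
  by (simp add: dot_def sum_distrib_left mult.assoc)
lemma dot_zero_left [simp]: "dot n (\<lambda>j. 0) a = 0"
  by (simp add: dot_def)
lemma dot_zero_right [simp]: "dot n a (\<lambda>j. 0) = 0"
  by (simp add: dot_def)

lemma sympl_form_dot: "sympl_form n x y = dot n (fst x) (snd y) - dot n (snd x) (fst y)"
  by (simp add: sympl_form_def dot_def)

lemma sympl_form_smul: "sympl_form n (vsmul c x) y = c * sympl_form n x y"
  by (simp add: sympl_form_dot vsmul_def dot_smul_left right_diff_distrib)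

section \<open>Pauli operators\<close>

lemma pauli_entry:
  "pauli n u x y = (if x \<in> basis_idx n \<and> y \<in> basis_idx n \<and> x = (\<lambda>j. y j + fst u j)
      then chi (dot n (snd u) y) else 0)"
  by (auto simp: pauli_def canon_def dot_def chi_sum)

lemma pauli_entry_in:
  "x \<in> basis_idx n \<Longrightarrow> y \<in> basis_idx n \<Longrightarrow>
   pauli n u x y = (if x = (\<lambda>j. y j + fst u j) then chi (dot n (snd u) y) else 0)"
  by (simp add: pauli_entry)

lemma pauli_mult:
  fixes u v :: "(nat \<Rightarrow> 'a::{finite,field}) \<times> (nat \<Rightarrow> 'a)"
  assumes u: "u \<in> sympl_vecs n" and v: "v \<in> sympl_vecs n"
  shows "op_mult n (pauli n u) (pauli n v) = op_smult n (chi (dot n (snd u) (fst v))) (pauli n (vadd u v))"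
proof (rule op_eqI[where n=n])
  fix x y :: "nat \<Rightarrow> 'a" assume x: "x \<in> basis_idx n" and y: "y \<in> basis_idx n"
  define w where "w = (\<lambda>j. y j + fst v j)"
  have w: "w \<in> basis_idx n" using y v by (auto simp: w_def basis_idx_def sympl_vecs_def fq_vecs_def)
  have "(\<Sum>z\<in>basis_idx n. pauli n u x z * pauli n v z y)
      = (\<Sum>z\<in>basis_idx n. if z = w then pauli n u x z * chi (dot n (snd v) y) else 0)"
    by (intro sum.cong refl) (auto simp: pauli_entry w_def y)
  also have "\<dots> = pauli n u x w * chi (dot n (snd v) y)"
    using w finite_basis[where 'a='a] by (simp add: sum.delta')
  also have "\<dots> = (if x = (\<lambda>j. y j + (fst u j + fst v j)) then
       chi (dot n (snd u) (fst v)) * chi (dot n (\<lambda>j. snd u j + snd v j) y) else 0)"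
  proof -
    have e1: "pauli n u x w = (if x = (\<lambda>j. w j + fst u j) then chi (dot n (snd u) w) else 0)"
      by (rule pauli_entry_in[OF x w])
    have e2: "(\<lambda>j. w j + fst u j) = (\<lambda>j. y j + (fst u j + fst v j))" by (simp add: w_def add_ac)
    have e3: "chi (dot n (snd u) w) = chi (dot n (snd u) y) * chi (dot n (snd u) (fst v))"
      by (simp add: w_def dot_add_right chi_add)
    have e4: "chi (dot n (\<lambda>j. snd u j + snd v j) y) = chi (dot n (snd u) y) * chi (dot n (snd v) y)"
      by (simp add: dot_add_left chi_add)
    show ?thesis unfolding e1 e2 e3 e4 by (simp add: mult_ac)
  qed
  finally show "op_mult n (pauli n u) (pauli n v) x y =
      op_smult n (chi (dot n (snd u) (fst v))) (pauli n (vadd u v)) x y"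
    using x y by (simp add: op_mult_def op_smult_def canon_def pauli_entry_in vadd_def)
qed simp_all

lemma pauli_vzero: "pauli n vzero = (op_id n :: 'a::{finite,field} qop)"
  apply (rule op_eqI[where n=n])
    apply simp
   apply simp
  by (auto simp: pauli_entry op_id_def canon_def vzero_def chi_0)

lemma pauli_unitary1:
  fixes u :: "(nat \<Rightarrow> 'a::{finite,field}) \<times> (nat \<Rightarrow> 'a)"
  assumes u: "u \<in> sympl_vecs n"
  shows "op_mult n (op_adj n (pauli n u)) (pauli n u) = op_id n"
proof (rule op_eqI[where n=n])
  fix x y :: "nat \<Rightarrow> 'a" assume x: "x \<in> basis_idx n" and y: "y \<in> basis_idx n"
  define w where "w = (\<lambda>j. x j + fst u j)"
  have w: "w \<in> basis_idx n" using x u by (auto simp: w_def basis_idx_def sympl_vecs_def fq_vecs_def)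
  have eq: "(\<lambda>j. x j + fst u j) = (\<lambda>j. y j + fst u j) \<longleftrightarrow> x = y"
    by (auto simp: fun_eq_iff)
  have "(\<Sum>z\<in>basis_idx n. cnj (pauli n u z x) * pauli n u z y)
      = (\<Sum>z\<in>basis_idx n. if z = w then cnj (chi (dot n (snd u) x)) * pauli n u z y else 0)"
    by (intro sum.cong refl) (auto simp: pauli_entry w_def x)
  also have "\<dots> = cnj (chi (dot n (snd u) x)) * pauli n u w y"
    using w finite_basis[where 'a='a] by (simp add: sum.delta')
  also have "\<dots> = (if x = y then 1 else 0)"
  proof (cases "x = y")
    case True
    then have "pauli n u w y = chi (dot n (snd u) y)" using pauli_entry_in[OF w y] by (simp add: w_def)
    then show ?thesis using True by simp
  next
    case False
    then have "w \<noteq> (\<lambda>j. y j + fst u j)" using eq by (simp add: w_def)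
    then show ?thesis using False by (simp add: pauli_entry_in[OF w y])
  qed
  finally show "op_mult n (op_adj n (pauli n u)) (pauli n u) x y = op_id n x y"
    using x y by (simp add: op_mult_def op_adj_def op_id_def canon_def)
qed simp_all

lemma pauli_unitary2:
  fixes u :: "(nat \<Rightarrow> 'a::{finite,field}) \<times> (nat \<Rightarrow> 'a)"
  assumes u: "u \<in> sympl_vecs n"
  shows "op_mult n (pauli n u) (op_adj n (pauli n u)) = op_id n"
proof (rule op_eqI[where n=n])
  fix x y :: "nat \<Rightarrow> 'a" assume x: "x \<in> basis_idx n" and y: "y \<in> basis_idx n"
  define w where "w = (\<lambda>j. x j - fst u j)"
  have w: "w \<in> basis_idx n" using x u by (auto simp: w_def basis_idx_def sympl_vecs_def fq_vecs_def)
  have xw: "z = w \<longleftrightarrow> x = (\<lambda>j. z j + fst u j)" for z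
    by (auto simp: w_def fun_eq_iff algebra_simps)
  have yw: "y = (\<lambda>j. w j + fst u j) \<longleftrightarrow> x = y"
    by (auto simp: w_def fun_eq_iff)
  have "(\<Sum>z\<in>basis_idx n. pauli n u x z * cnj (pauli n u y z))
      = (\<Sum>z\<in>basis_idx n. if z = w then chi (dot n (snd u) z) * cnj (pauli n u y z) else 0)"
    by (intro sum.cong refl) (auto simp: pauli_entry x xw)
  also have "\<dots> = chi (dot n (snd u) w) * cnj (pauli n u y w)"
    using w finite_basis[where 'a='a] by (simp add: sum.delta')
  also have "\<dots> = (if x = y then 1 else 0)"
    using yw by (auto simp: pauli_entry_in[OF y w])
  finally show "op_mult n (pauli n u) (op_adj n (pauli n u)) x y = op_id n x y"
    using x y by (simp add: op_mult_def op_adj_def op_id_def canon_def)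
qed simp_all

lemma pauli_adj_mult:
  fixes u v :: "(nat \<Rightarrow> 'a::{finite,field}) \<times> (nat \<Rightarrow> 'a)"
  assumes u: "u \<in> sympl_vecs n" and v: "v \<in> sympl_vecs n"
  shows "op_mult n (op_adj n (pauli n u)) (pauli n v)
       = op_smult n (cnj (chi (dot n (snd u) (fst (vsub v u))))) (pauli n (vsub v u))"
proof -
  let ?w = "vsub v u" and ?c = "chi (dot n (snd u) (fst (vsub v u)))"
  have "op_mult n (pauli n u) (pauli n ?w) = op_smult n ?c (pauli n v)"
    using pauli_mult[OF u V_vsub[OF v u]] by simp
  then have "op_mult n (op_adj n (pauli n u)) (op_mult n (pauli n u) (pauli n ?w))
      = op_smult n ?c (op_mult n (op_adj n (pauli n u)) (pauli n v))"
    by (simp add: mult_smult_right)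
  then have "pauli n ?w = op_smult n ?c (op_mult n (op_adj n (pauli n u)) (pauli n v))"
    by (simp add: mult_assoc[symmetric] pauli_unitary1[OF u])
  then have "op_smult n (cnj ?c) (pauli n ?w) = op_smult n (cnj ?c * ?c) (op_mult n (op_adj n (pauli n u)) (pauli n v))"
    by simp
  then show ?thesis by simp
qed

lemma pauli_comm_gen:
  fixes u v :: "(nat \<Rightarrow> 'a::{finite,field}) \<times> (nat \<Rightarrow> 'a)"
  assumes u: "u \<in> sympl_vecs n" and v: "v \<in> sympl_vecs n"
  shows "op_mult n (pauli n u) (pauli n v) = op_smult n (chi (- sympl_form n u v)) (op_mult n (pauli n v) (pauli n u))"
proof -
  have "chi (- sympl_form n u v) * chi (dot n (snd v) (fst u)) = chi (dot n (snd u) (fst v))"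
    unfolding chi_add[symmetric] sympl_form_dot by (simp add: dot_comm)
  then show ?thesis
    by (simp add: pauli_mult[OF u v] pauli_mult[OF v u] vadd_comm)
qed

lemma pauli_comm:
  fixes u v :: "(nat \<Rightarrow> 'a::{finite,field}) \<times> (nat \<Rightarrow> 'a)"
  assumes u: "u \<in> sympl_vecs n" and v: "v \<in> sympl_vecs n" and s: "sympl_form n u v = 0"
  shows "op_mult n (pauli n u) (pauli n v) = op_mult n (pauli n v) (pauli n u)"
  using pauli_comm_gen[OF u v] s by (simp add: chi_0)

lemma tr_pauli:
  fixes u :: "(nat \<Rightarrow> 'a::{finite,field}) \<times> (nat \<Rightarrow> 'a)"
  assumes u: "u \<in> sympl_vecs n" and nz: "u \<noteq> vzero"
  shows "tr n (pauli n u) = 0"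
proof (cases "fst u = (\<lambda>j. 0)")
  case False
  then obtain j where j: "fst u j \<noteq> 0" by auto
  have "pauli n u x x = 0" for x
  proof -
    have "x \<noteq> (\<lambda>j. x j + fst u j)" using j by (auto simp: fun_eq_iff)
    then show ?thesis by (simp add: pauli_entry)
  qed
  then show ?thesis by (simp add: tr_def)
next
  case True
  then have "snd u \<noteq> (\<lambda>j. 0)" using nz by (auto simp: vzero_def prod_eq_iff)
  then obtain j0 where j0: "snd u j0 \<noteq> 0" by auto
  then have j0n: "j0 \<in> {1..n}" using u by (auto simp: sympl_vecs_def fq_vecs_def)
  obtain s :: 'a where s: "chi s \<noteq> 1" using chi_nontrivial by blast
  define t where "t = s / snd u j0"
  define h where "h = (\<lambda>y::nat \<Rightarrow> 'a. \<lambda>j. y j + (if j = j0 then t else 0))"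
  define g where "g = (\<lambda>y::nat \<Rightarrow> 'a. \<lambda>j. y j - (if j = j0 then t else 0))"
  have hN: "(\<lambda>j. y j + (if j = j0 then t else 0)) \<in> basis_idx n" if "y \<in> basis_idx n" for y
    using that j0n by (auto simp: basis_idx_def fq_vecs_def)
  have gN: "(\<lambda>j. y j - (if j = j0 then t else 0)) \<in> basis_idx n" if "y \<in> basis_idx n" for y
    using that j0n by (auto simp: basis_idx_def fq_vecs_def)
  have bij: "bij_betw h (basis_idx n) (basis_idx n)"
    by (rule bij_betw_byWitness[of _ g]) (auto simp: h_def g_def hN gN)
  have dh: "dot n (snd u) (h y) = dot n (snd u) y + s" for y
  proof -
    have "dot n (snd u) (\<lambda>j. if j = j0 then t else 0) = snd u j0 * t"
      using j0n by (simp add: dot_def if_distrib[of "\<lambda>x. _ * x"] sum.delta' cong: if_cong)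
    then show ?thesis using j0 by (simp add: h_def dot_add_right t_def)
  qed
  have diag: "pauli n u x x = (if x \<in> basis_idx n then chi (dot n (snd u) x) else 0)" for x
    using True by (simp add: pauli_entry)
  define S where "S = (\<Sum>y\<in>basis_idx n. chi (dot n (snd u) y))"
  have "S = (\<Sum>y\<in>basis_idx n. chi (dot n (snd u) (h y)))"
    unfolding S_def by (rule sum.reindex_bij_betw[OF bij, symmetric])
  also have "\<dots> = chi s * S"
    by (simp add: S_def dh chi_add sum_distrib_left mult.commute)
  finally have "(1 - chi s) * S = 0" by (simp add: algebra_simps)
  then have "S = 0" using s by simp
  then show ?thesis by (simp add: tr_def diag S_def)
qed

lemma tr_pauli_vzero: "tr n (pauli n vzero :: 'a::{finite,field} qop) = of_nat (card (basis_idx n :: (nat \<Rightarrow> 'a) set))"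
  by (simp add: pauli_vzero tr_id)

lemma card_basis_pos: "card (basis_idx n :: (nat \<Rightarrow> 'a::{finite,zero}) set) > 0"
proof -
  have "(\<lambda>j. 0) \<in> (basis_idx n :: (nat \<Rightarrow> 'a) set)" by (simp add: basis_idx_def)
  then show ?thesis using finite_basis[where 'a='a] by (auto simp: card_gt_0_iff)
qed

lemma finite_V: "finite (sympl_vecs n :: ((nat \<Rightarrow> 'a::{finite,zero}) \<times> (nat \<Rightarrow> 'a)) set)"
  by (simp add: sympl_vecs_def finite_fq_vecs)

lemma pauli_at_eq: "pauli_at n j a b = pauli n (\<lambda>k. if k = j then a else 0, \<lambda>k. if k = j then b else 0)"
  by (simp add: pauli_at_def)


lemma apply_sum: "op_apply n (op_sum n f S) v = (\<lambda>x. \<Sum>i\<in>S. op_apply n (f i) v x)"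
  by (auto simp: op_apply_def op_sum_def canon_def fun_eq_iff sum_distrib_right intro: sum.swap)

lemma op_sum_const: "op_sum n (\<lambda>i. A) S = op_smult n (of_nat (card S)) A"
  by (auto simp: op_sum_def op_smult_def canon_def fun_eq_iff)

lemma id_id: "op_mult n (op_id n) (op_id n) = (op_id n :: 'a::{finite,zero} qop)"
  by simp

lemma smult_eq_entry: "op_smult n a X = op_smult n b X \<Longrightarrow> x \<in> basis_idx n \<Longrightarrow> y \<in> basis_idx n \<Longrightarrow> a * X x y = b * X x y"
proof -
  assume e: "op_smult n a X = op_smult n b X" and x: "x \<in> basis_idx n" and y: "y \<in> basis_idx n"
  have "op_smult n a X x y = op_smult n b X x y" using e by simp
  then show ?thesis using x y by (simp add: op_smult_def canon_def)
qed

lemma smult_eq_entry': "op_smult n a X = X \<Longrightarrow> x \<in> basis_idx n \<Longrightarrow> y \<in> basis_idx n \<Longrightarrow> a * X x y = X x y"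
proof -
  assume e: "op_smult n a X = X" and x: "x \<in> basis_idx n" and y: "y \<in> basis_idx n"
  have "op_smult n a X x y = X x y" using e by simp
  then show ?thesis using x y by (simp add: op_smult_def canon_def)
qed

lemma cnj_xi_pow: "cnj (xi TYPE('a::{finite,field}) ^ l) * xi TYPE('a) ^ l = 1"
  by (simp add: xi_def Complex.DeMoivre cis_cnj cis_mult)

locale stab =
  fixes n :: nat and C :: "((nat \<Rightarrow> 'a::{finite,field}) \<times> (nat \<Rightarrow> 'a)) set"
    and lam :: "'a qop \<Rightarrow> complex"
  assumes lin: "linear_code n C" and so: "sympl_self_orth n C" and ch: "stab_character n C lam"
begin

abbreviation "S \<equiv> stab_group n C"
abbreviation "N \<equiv> (basis_idx n :: (nat \<Rightarrow> 'a) set)"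

lemma C_V: "C \<subseteq> sympl_vecs n" using lin by (simp add: linear_code_def)
lemma C_V': "c \<in> C \<Longrightarrow> c \<in> sympl_vecs n" using C_V by blast
lemma finite_C: "finite C" using C_V finite_V finite_subset by blast
lemma zero_C: "vzero \<in> C" using lin by (simp add: linear_code_def vzero_def)
lemma add_C: "c \<in> C \<Longrightarrow> d \<in> C \<Longrightarrow> vadd c d \<in> C" using lin by (simp add: linear_code_def vadd_def)
lemma smul_C: "c \<in> C \<Longrightarrow> vsmul t c \<in> C" using lin by (simp add: linear_code_def vsmul_def)
lemma sub_C: "c \<in> C \<Longrightarrow> d \<in> C \<Longrightarrow> vsub c d \<in> C"
proof -
  assume c: "c \<in> C" and d: "d \<in> C"
  have "vsub c d = vadd c (vsmul (-1) d)" by (simp add: vsub_def vadd_def vsmul_def)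
  then show ?thesis using add_C[OF c smul_C[OF d]] by simp
qed
lemma card_C_pos: "card C > 0" using finite_C zero_C by (auto simp: card_gt_0_iff)
lemma C_dual: "c \<in> C \<Longrightarrow> c \<in> sympl_dual n C" using so by (auto simp: sympl_self_orth_def)
lemma C_orth: "c \<in> C \<Longrightarrow> d \<in> C \<Longrightarrow> sympl_form n d c = 0"
  using C_dual by (auto simp: sympl_dual_def)

lemma lam_nz: "A \<in> S \<Longrightarrow> lam A \<noteq> 0" using ch by (simp add: stab_character_def)
lemma lam_mult: "A \<in> S \<Longrightarrow> B \<in> S \<Longrightarrow> lam (op_mult n A B) = lam A * lam B"
  using ch by (simp add: stab_character_def)
lemma lam_xi: "lam (op_smult n (xi TYPE('a)) (op_id n)) = xi TYPE('a)"
  using ch by (simp add: stab_character_def)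

lemma cop_S: "A \<in> S \<Longrightarrow> cop n A"
  by (induction rule: stab_group.induct) auto

lemma id_S: "op_id n \<in> S"
  using stab_group.scal[of n 0 C] by simp

lemma lam_id: "lam (op_id n) = 1"
proof -
  have "lam (op_id n) = lam (op_id n) * lam (op_id n)"
    using lam_mult[OF id_S id_S] by simp
  then show ?thesis using lam_nz[OF id_S] by simp
qed

lemma lam_scal: "lam (op_smult n (xi TYPE('a) ^ l) (op_id n)) = xi TYPE('a) ^ l"
proof (induction l)
  case 0 then show ?case by (simp add: lam_id)
next
  case (Suc l)
  have "op_smult n (xi TYPE('a) ^ Suc l) (op_id n :: 'a qop)
      = op_mult n (op_smult n (xi TYPE('a) ^ 1) (op_id n)) (op_smult n (xi TYPE('a) ^ l) (op_id n))"
    by (simp add: mult_smult_left mult_smult_right id_id mult.commute)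
  then show ?case
    using lam_mult[OF stab_group.scal[of n 1 C] stab_group.scal[of n l C]] Suc lam_xi by simp
qed

lemma lam_smult_xi: "E \<in> S \<Longrightarrow> lam (op_smult n (xi TYPE('a) ^ l) E) = xi TYPE('a) ^ l * lam E"
proof -
  assume E: "E \<in> S"
  have "op_smult n (xi TYPE('a) ^ l) E = op_mult n (op_smult n (xi TYPE('a) ^ l) (op_id n)) E"
    using cop_S[OF E] by (simp add: mult_smult_left)
  then show ?thesis using lam_mult[OF stab_group.scal E] lam_scal by simp
qed

lemma lam_smult_chi: "E \<in> S \<Longrightarrow> lam (op_smult n (chi (x::'a)) E) = chi x * lam E"
proof -
  assume E: "E \<in> S"
  have "chi x = xi TYPE('a) ^ trace_nat x" by (simp add: chi_def)
  then show ?thesis using lam_smult_xi[OF E, of "trace_nat x"] by simp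
qed

lemma lam_pauli_mult:
  assumes c: "c \<in> C" and d: "d \<in> C"
  shows "lam (pauli n c) * lam (pauli n d) = chi (dot n (snd c) (fst d)) * lam (pauli n (vadd c d))"
proof -
  have "lam (pauli n c) * lam (pauli n d) = lam (op_mult n (pauli n c) (pauli n d))"
    using lam_mult[OF stab_group.gen[OF c] stab_group.gen[OF d]] by simp
  also have "\<dots> = lam (op_smult n (chi (dot n (snd c) (fst d))) (pauli n (vadd c d)))"
    by (simp add: pauli_mult[OF C_V' C_V', OF c d])
  also have "\<dots> = chi (dot n (snd c) (fst d)) * lam (pauli n (vadd c d))"
    by (rule lam_smult_chi[OF stab_group.gen[OF add_C[OF c d]]])
  finally show ?thesis .
qed

lemma lam_pauli_nz: "c \<in> C \<Longrightarrow> lam (pauli n c) \<noteq> 0"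
  using lam_nz stab_group.gen by blast

definition Pj :: "'a qop" where
  "Pj = op_smult n (1 / of_nat (card C))
     (op_sum n (\<lambda>c. op_smult n (inverse (lam (pauli n c))) (pauli n c)) C)"

lemma cop_Pj [simp]: "cop n Pj" by (simp add: Pj_def)

lemma Pj_gen: "c \<in> C \<Longrightarrow> op_mult n (pauli n c) Pj = op_smult n (lam (pauli n c)) Pj"
proof -
  assume c: "c \<in> C"
  let ?k = "1 / of_nat (card C) :: complex"
  let ?g = "\<lambda>e. op_smult n (inverse (lam (pauli n e))) (pauli n e)"
  have "op_mult n (pauli n c) Pj =
     op_smult n ?k (op_sum n (\<lambda>d. op_smult n (inverse (lam (pauli n d))) (op_mult n (pauli n c) (pauli n d))) C)"
    by (simp add: Pj_def mult_smult_right mult_sum_right)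
  also have "\<dots> = op_smult n ?k (op_sum n (\<lambda>d. op_smult n (lam (pauli n c)) (?g (vadd c d))) C)"
  proof (intro arg_cong[where f="op_smult n ?k"] op_sum_cong)
    fix d assume d: "d \<in> C"
    have e: "inverse (lam (pauli n d)) * chi (dot n (snd c) (fst d)) = lam (pauli n c) * inverse (lam (pauli n (vadd c d)))"
      using lam_pauli_mult[OF c d] lam_pauli_nz[OF c] lam_pauli_nz[OF d] lam_pauli_nz[OF add_C[OF c d]]
      by (simp add: field_simps)
    show "op_smult n (inverse (lam (pauli n d))) (op_mult n (pauli n c) (pauli n d)) =
        op_smult n (lam (pauli n c)) (?g (vadd c d))"
      by (simp add: pauli_mult[OF C_V' C_V', OF c d] e)
  qed
  also have "\<dots> = op_smult n ?k (op_smult n (lam (pauli n c)) (op_sum n (\<lambda>d. ?g (vadd c d)) C))"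
    by (simp add: smult_sum)
  also have "\<dots> = op_smult n (lam (pauli n c)) (op_smult n ?k (op_sum n (\<lambda>d. ?g (vadd c d)) C))"
    by (simp add: mult.commute)
  also have "op_sum n (\<lambda>d. ?g (vadd c d)) C = op_sum n ?g C"
  proof (rule op_sum_reindex_bij)
    show "bij_betw (vadd c) C C"
    proof (rule bij_betw_byWitness[of _ "\<lambda>e. vsub e c"])
      show "\<forall>a\<in>C. vsub (vadd c a) c = a" by simp
      show "\<forall>a\<in>C. vadd c (vsub a c) = a" by simp
      show "vadd c ` C \<subseteq> C" using add_C[OF c] by auto
      show "(\<lambda>e. vsub e c) ` C \<subseteq> C" using sub_C[OF _ c] by blast
    qed
  qed
  finally show ?thesis by (simp add: Pj_def)
qed

lemma S_props:
  "A \<in> S \<Longrightarrow> op_mult n A Pj = op_smult n (lam A) Pj \<and> op_mult n (op_adj n A) A = op_id n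
     \<and> op_mult n A (op_adj n A) = op_id n"
proof (induction rule: stab_group.induct)
  case (scal l)
  have u: "cnj (xi TYPE('a) ^ l) * xi TYPE('a) ^ l = 1" by (rule cnj_xi_pow)
  then have u': "xi TYPE('a) ^ l * cnj (xi TYPE('a) ^ l) = 1" by (simp add: mult.commute)
  show ?case using u u'
    by (simp add: lam_scal mult_smult_left mult_smult_right adj_smult)
next
  case (gen c)
  then show ?case using Pj_gen pauli_unitary1 pauli_unitary2 C_V' by blast
next
  case (mult A B)
  have cA: "cop n A" and cB: "cop n B" using mult.hyps cop_S by auto
  have "op_mult n (op_mult n A B) Pj = op_smult n (lam A * lam B) Pj"
    using mult.IH by (simp add: mult_assoc mult_smult_right mult.commute)
  moreover have "op_mult n (op_adj n (op_mult n A B)) (op_mult n A B) = op_id n"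
  proof -
    have "op_mult n (op_adj n (op_mult n A B)) (op_mult n A B)
        = op_mult n (op_adj n B) (op_mult n (op_mult n (op_adj n A) A) B)"
      by (simp add: adj_mult mult_assoc)
    also have "\<dots> = op_id n" using mult.IH cB by simp
    finally show ?thesis .
  qed
  moreover have "op_mult n (op_mult n A B) (op_adj n (op_mult n A B)) = op_id n"
  proof -
    have "op_mult n (op_mult n A B) (op_adj n (op_mult n A B))
        = op_mult n A (op_mult n (op_mult n B (op_adj n B)) (op_adj n A))"
      by (simp add: adj_mult mult_assoc)
    also have "\<dots> = op_id n" using mult.IH cA by simp
    finally show ?thesis .
  qed
  ultimately show ?case using lam_mult[OF mult.hyps(1,2)] by simp
next
  case (inv A)
  have cA: "cop n A" using inv.hyps cop_S by auto
  have l: "lam (op_adj n A) * lam A = 1"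
    using lam_mult[OF stab_group.inv[OF inv.hyps] inv.hyps] inv.IH lam_id by simp
  have "op_mult n (op_adj n A) (op_mult n A Pj) = op_mult n (op_mult n (op_adj n A) A) Pj"
    by (simp only: mult_assoc)
  also have "\<dots> = Pj" using inv.IH by simp
  finally have "op_mult n (op_adj n A) (op_mult n A Pj) = Pj" .
  then have "op_smult n (lam A) (op_mult n (op_adj n A) Pj) = Pj"
    using inv.IH by (simp add: mult_smult_right)
  then have "op_smult n (lam (op_adj n A)) (op_smult n (lam A) (op_mult n (op_adj n A) Pj))
     = op_smult n (lam (op_adj n A)) Pj" by simp
  then have "op_mult n (op_adj n A) Pj = op_smult n (lam (op_adj n A)) Pj"
    using l by (simp add: mult.commute)
  then show ?case using inv.IH cA by simp
qed

lemma S_mult_Pj: "A \<in> S \<Longrightarrow> op_mult n A Pj = op_smult n (lam A) Pj"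
  using S_props by blast

lemma Q_imp_Pj: "v \<in> stab_code n C lam \<Longrightarrow> op_apply n Pj v = v"
proof -
  assume v: "v \<in> stab_code n C lam"
  then have vq: "v \<in> qvecs n" and all: "\<forall>E\<in>S. op_apply n E v = (\<lambda>x. lam E * v x)"
    by (auto simp: stab_code_def)
  have ev: "op_apply n (pauli n c) v = (\<lambda>x. lam (pauli n c) * v x)" if c: "c \<in> C" for c
    using all stab_group.gen[OF c] by blast
  show ?thesis
  proof (rule ext)
    fix x
    have "op_apply n Pj v x = 1 / of_nat (card C) * (\<Sum>c\<in>C. inverse (lam (pauli n c)) * (lam (pauli n c) * v x))"
      by (simp add: Pj_def apply_smult apply_sum ev)
    also have "\<dots> = 1 / of_nat (card C) * (\<Sum>c\<in>C. v x)"
      using lam_pauli_nz by (intro arg_cong[where f="\<lambda>t. _ * t"] sum.cong) auto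
    also have "\<dots> = v x" using card_C_pos by simp
    finally show "op_apply n Pj v x = v x" .
  qed
qed

lemma Pj_imp_Q: "v \<in> qvecs n \<Longrightarrow> op_apply n Pj v = v \<Longrightarrow> v \<in> stab_code n C lam"
proof -
  assume vq: "v \<in> qvecs n" and pv: "op_apply n Pj v = v"
  have "op_apply n E v = (\<lambda>x. lam E * v x)" if E: "E \<in> S" for E
  proof -
    have "op_apply n E v = op_apply n E (op_apply n Pj v)" using pv by simp
    also have "\<dots> = op_apply n (op_smult n (lam E) Pj) v" by (simp add: apply_mult[symmetric] S_mult_Pj[OF E])
    also have "\<dots> = (\<lambda>x. lam E * v x)" by (simp add: apply_smult pv)
    finally show ?thesis .
  qed
  then show ?thesis using vq by (simp add: stab_code_def)
qed

lemma Q_iff: "v \<in> stab_code n C lam \<longleftrightarrow> v \<in> qvecs n \<and> op_apply n Pj v = v"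
  using Q_imp_Pj Pj_imp_Q by (auto simp: stab_code_def)

lemma Pj_idem: "op_mult n Pj Pj = Pj"
proof -
  let ?k = "1 / of_nat (card C) :: complex"
  have "op_mult n Pj Pj = op_smult n ?k (op_sum n (\<lambda>c. op_smult n (inverse (lam (pauli n c))) (op_mult n (pauli n c) Pj)) C)"
    by (simp add: Pj_def[of] mult_smult_left mult_sum_left)
  also have "\<dots> = op_smult n ?k (op_sum n (\<lambda>c. op_smult n 1 Pj) C)"
    using lam_pauli_nz by (intro arg_cong[where f="op_smult n ?k"] op_sum_cong) (simp add: Pj_gen)
  also have "\<dots> = Pj" using card_C_pos by (simp add: op_sum_const)
  finally show ?thesis .
qed

lemma dual_V: "u \<in> sympl_dual n C \<Longrightarrow> u \<in> sympl_vecs n"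
  by (simp add: sympl_dual_def)

lemma sympl_antisym: "sympl_form n u v = - sympl_form n v u"
  by (simp add: sympl_form_dot dot_comm)

lemma dual_comm_Pj:
  assumes u: "u \<in> sympl_dual n C"
  shows "op_mult n (pauli n u) Pj = op_mult n Pj (pauli n u)"
proof -
  have uV: "u \<in> sympl_vecs n" using dual_V[OF u] .
  have "op_mult n (pauli n u) (pauli n c) = op_mult n (pauli n c) (pauli n u)" if c: "c \<in> C" for c
  proof (rule pauli_comm[OF uV C_V'[OF c]])
    have "sympl_form n c u = 0" using u c by (auto simp: sympl_dual_def)
    then show "sympl_form n u c = 0" using sympl_antisym[of u c] by simp
  qed
  then show ?thesis
    by (simp add: Pj_def mult_smult_left mult_smult_right mult_sum_left mult_sum_right cong: op_sum_cong)
qed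

lemma Pj_gen_right: "c \<in> C \<Longrightarrow> op_mult n Pj (pauli n c) = op_smult n (lam (pauli n c)) Pj"
proof -
  assume c: "c \<in> C"
  show ?thesis using dual_comm_Pj[OF C_dual[OF c]] Pj_gen[OF c] by simp
qed

lemma tr_Pj: "tr n Pj = of_nat (card N) / of_nat (card C)"
proof -
  have "tr n Pj = 1 / of_nat (card C) * (\<Sum>c\<in>C. inverse (lam (pauli n c)) * tr n (pauli n c))"
    by (simp add: Pj_def tr_smult tr_sum)
  also have "(\<Sum>c\<in>C. inverse (lam (pauli n c)) * tr n (pauli n c))
      = (\<Sum>c\<in>C. if c = vzero then of_nat (card N) else 0)"
  proof (rule sum.cong)
    fix c assume c: "c \<in> C"
    show "inverse (lam (pauli n c)) * tr n (pauli n c) = (if c = vzero then of_nat (card N) else 0)"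
      using tr_pauli[OF C_V'[OF c]] tr_pauli_vzero[of n] lam_id by (auto simp: pauli_vzero)
  qed simp
  also have "\<dots> = of_nat (card N)" using zero_C finite_C by (simp add: sum.delta')
  finally show ?thesis by simp
qed

lemma Pj_nonzero: "\<exists>x\<in>N. \<exists>y\<in>N. Pj x y \<noteq> 0"
proof (rule ccontr)
  assume "\<not> ?thesis"
  then have "tr n Pj = 0" by (simp add: tr_def)
  moreover have "card N > 0" by (rule card_basis_pos)
  ultimately show False using tr_Pj card_C_pos by simp
qed

lemma lam_unit: "c \<in> C \<Longrightarrow> cnj (lam (pauli n c)) * lam (pauli n c) = 1"
proof -
  assume c: "c \<in> C"
  let ?l = "lam (pauli n c)"
  have "op_mult n (op_adj n (op_mult n (pauli n c) Pj)) (op_mult n (pauli n c) Pj)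
      = op_mult n (op_adj n Pj) (op_mult n (op_mult n (op_adj n (pauli n c)) (pauli n c)) Pj)"
    by (simp add: adj_mult mult_assoc)
  also have "\<dots> = op_mult n (op_adj n Pj) Pj" by (simp add: pauli_unitary1[OF C_V'[OF c]])
  finally have feq0: "op_smult n (?l * cnj ?l) (op_mult n (op_adj n Pj) Pj) = op_mult n (op_adj n Pj) Pj"
    by (simp add: Pj_gen[OF c] adj_smult mult_smult_left mult_smult_right)
  then have feq: "op_smult n (cnj ?l * ?l) (op_mult n (op_adj n Pj) Pj) = op_mult n (op_adj n Pj) Pj"
    by (simp add: mult.commute)
  obtain x y where xy: "x \<in> N" "y \<in> N" "Pj x y \<noteq> 0" using Pj_nonzero by blast
  have "(cnj ?l * ?l) * op_mult n (op_adj n Pj) Pj y y = op_mult n (op_adj n Pj) Pj y y"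
    using smult_eq_entry'[OF feq xy(2) xy(2)] by simp
  moreover have "op_mult n (op_adj n Pj) Pj y y \<noteq> 0"
  proof -
    have "op_mult n (op_adj n Pj) Pj y y = (\<Sum>z\<in>N. cnj (Pj z y) * Pj z y)"
      using xy by (simp add: op_mult_def op_adj_def canon_def)
    also have "\<dots> = of_real (\<Sum>z\<in>N. (cmod (Pj z y))^2)"
      unfolding of_real_sum
    proof (rule sum.cong)
      fix z show "cnj (Pj z y) * Pj z y = complex_of_real ((cmod (Pj z y))\<^sup>2)"
        by (simp only: complex_norm_square mult.commute)
    qed simp
    also have "\<dots> \<noteq> 0"
    proof -
      have "(\<Sum>z\<in>N. (cmod (Pj z y))^2) > 0"
        by (rule sum_pos2[of N x]) (use xy finite_basis[where 'a='a] in auto)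
      then show ?thesis by (metis less_irrefl of_real_eq_0_iff)
    qed
    finally show ?thesis .
  qed
  ultimately show ?thesis by simp
qed

lemma Pj_herm: "op_adj n Pj = Pj"
proof -
  let ?k = "1 / of_nat (card C) :: complex"
  have adjc: "op_mult n (op_adj n (pauli n c)) Pj = op_smult n (inverse (lam (pauli n c))) Pj" if c: "c \<in> C" for c
  proof -
    have "op_mult n (op_adj n (pauli n c)) (op_mult n (pauli n c) Pj) = Pj"
      by (simp add: mult_assoc[symmetric] pauli_unitary1[OF C_V'[OF c]])
    then have "op_smult n (lam (pauli n c)) (op_mult n (op_adj n (pauli n c)) Pj) = Pj"
      by (simp add: Pj_gen[OF c] mult_smult_right)
    then have "op_smult n (inverse (lam (pauli n c))) (op_smult n (lam (pauli n c)) (op_mult n (op_adj n (pauli n c)) Pj))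
        = op_smult n (inverse (lam (pauli n c))) Pj" by simp
    then show ?thesis using lam_pauli_nz[OF c] by simp
  qed
  have "op_mult n (op_adj n Pj) Pj = op_smult n (cnj ?k)
       (op_sum n (\<lambda>c. op_smult n (cnj (inverse (lam (pauli n c)))) (op_mult n (op_adj n (pauli n c)) Pj)) C)"
    by (simp add: Pj_def[of] adj_smult adj_sum mult_smult_left mult_sum_left)
  also have "\<dots> = op_smult n (cnj ?k) (op_sum n (\<lambda>c. op_smult n 1 Pj) C)"
  proof (intro arg_cong[where f="op_smult n (cnj ?k)"] op_sum_cong)
    fix c assume c: "c \<in> C"
    have "cnj (inverse (lam (pauli n c))) * inverse (lam (pauli n c)) = 1"
      using lam_unit[OF c] lam_pauli_nz[OF c] by (simp add: field_simps complex_cnj_inverse)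
    then show "op_smult n (cnj (inverse (lam (pauli n c)))) (op_mult n (op_adj n (pauli n c)) Pj) = op_smult n 1 Pj"
      by (simp add: adjc[OF c])
  qed
  also have "\<dots> = Pj" using card_C_pos by (simp add: op_sum_const)
  finally have h: "op_mult n (op_adj n Pj) Pj = Pj" .
  have "op_adj n Pj = op_adj n (op_mult n (op_adj n Pj) Pj)" using h by simp
  also have "\<dots> = op_mult n (op_adj n Pj) Pj" by (simp add: adj_mult)
  finally show ?thesis using h by simp
qed

lemma PEP_C: "u \<in> C \<Longrightarrow> op_mult n Pj (op_mult n (pauli n u) Pj) = op_smult n (lam (pauli n u)) Pj"
  by (simp add: Pj_gen mult_smult_right Pj_idem)

lemma PEP_zero:
  assumes uV: "u \<in> sympl_vecs n" and nd: "u \<notin> sympl_dual n C"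
  shows "op_mult n Pj (op_mult n (pauli n u) Pj) = (\<lambda>x y. 0)"
proof -
  obtain c where c: "c \<in> C" and sc: "sympl_form n c u \<noteq> 0" using uV nd by (auto simp: sympl_dual_def)
  obtain s0 :: 'a where s0: "chi s0 \<noteq> 1" using chi_nontrivial by blast
  define t where "t = - s0 / sympl_form n c u"
  define c' where "c' = vsmul t c"
  have c': "c' \<in> C" using smul_C[OF c] by (simp add: c'_def)
  have "sympl_form n c' u = - s0" using sc by (simp add: c'_def sympl_form_smul t_def)
  then have r: "op_mult n (pauli n c') (pauli n u) = op_smult n (chi s0) (op_mult n (pauli n u) (pauli n c'))"
    using pauli_comm_gen[OF C_V'[OF c'] uV] by simp
  let ?X = "op_mult n Pj (op_mult n (pauli n u) Pj)"
  let ?l = "lam (pauli n c')"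
  have "op_smult n ?l ?X = op_mult n (op_mult n Pj (pauli n c')) (op_mult n (pauli n u) Pj)"
    by (simp add: Pj_gen_right[OF c'] mult_smult_left)
  also have "\<dots> = op_mult n Pj (op_mult n (op_mult n (pauli n c') (pauli n u)) Pj)"
    by (simp add: mult_assoc)
  also have "\<dots> = op_smult n (chi s0 * ?l) ?X"
    by (simp add: r mult_smult_left mult_smult_right mult_assoc Pj_gen[OF c'])
  finally have eq: "op_smult n ?l ?X = op_smult n (chi s0 * ?l) ?X" .
  show ?thesis
  proof (rule op_eqI[where n=n])
    fix x y assume x: "x \<in> N" and y: "y \<in> N"
    from smult_eq_entry[OF eq x y] have "?l * ?X x y = chi s0 * ?l * ?X x y" .
    then have "(1 - chi s0) * ?l * ?X x y = 0" by (simp add: algebra_simps)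
    then show "?X x y = 0" using s0 lam_pauli_nz[OF c'] by simp
  qed simp_all
qed

end


definition VI :: "nat \<Rightarrow> nat set \<Rightarrow> ((nat \<Rightarrow> 'a::zero) \<times> (nat \<Rightarrow> 'a)) set" where
  "VI n J = {u \<in> sympl_vecs n. \<forall>j. j \<notin> J \<longrightarrow> fst u j = 0 \<and> snd u j = 0}"

definition dl :: "nat \<Rightarrow> 'a \<times> 'a \<Rightarrow> (nat \<Rightarrow> 'a::zero) \<times> (nat \<Rightarrow> 'a)" where
  "dl j p = (\<lambda>k. if k = j then fst p else 0, \<lambda>k. if k = j then snd p else 0)"

lemma VI_V: "u \<in> VI n J \<Longrightarrow> u \<in> sympl_vecs n" by (simp add: VI_def)

lemma VI_empty: "VI n {} = {vzero}"
  by (auto simp: VI_def vzero_def prod_eq_iff fun_eq_iff sympl_vecs_def fq_vecs_def)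

lemma finite_VI: "finite (VI n J :: ((nat \<Rightarrow> 'a::{finite,zero}) \<times> (nat \<Rightarrow> 'a)) set)"
  using finite_V[of n] by (rule finite_subset[rotated]) (auto simp: VI_def)

lemma VI_vadd: "u \<in> VI n J \<Longrightarrow> v \<in> VI n J \<Longrightarrow> vadd u v \<in> (VI n J :: ((nat \<Rightarrow> 'a::ab_group_add) \<times> (nat \<Rightarrow> 'a)) set)"
  unfolding VI_def using V_vadd[of u n v] by (auto simp: vadd_def)
lemma VI_vsub: "u \<in> VI n J \<Longrightarrow> v \<in> VI n J \<Longrightarrow> vsub u v \<in> (VI n J :: ((nat \<Rightarrow> 'a::ab_group_add) \<times> (nat \<Rightarrow> 'a)) set)"
  unfolding VI_def using V_vsub[of u n v] by (auto simp: vsub_def)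

lemma bij_VI:
  fixes J :: "nat set"
  assumes j: "j \<in> {1..n}" and jJ: "j \<notin> J"
  shows "bij_betw (\<lambda>p. vadd (dl j (fst p)) (snd p)) (UNIV \<times> VI n J) (VI n (insert j J) :: ((nat \<Rightarrow> 'a::ab_group_add) \<times> (nat \<Rightarrow> 'a)) set)"
proof (rule bij_betw_byWitness[of _ "\<lambda>w. ((fst w j, snd w j), (\<lambda>k. if k = j then 0 else fst w k, \<lambda>k. if k = j then 0 else snd w k))"])
  show "\<forall>a\<in>UNIV \<times> VI n J. ((fst (vadd (dl j (fst a)) (snd a)) j, snd (vadd (dl j (fst a)) (snd a)) j),
        (\<lambda>k. if k = j then 0 else fst (vadd (dl j (fst a)) (snd a)) k),
        (\<lambda>k. if k = j then 0 else snd (vadd (dl j (fst a)) (snd a)) k)) = a"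
    using jJ by (auto simp: VI_def vadd_def dl_def fun_eq_iff prod_eq_iff)
  show "\<forall>a'\<in>VI n (insert j J). vadd (dl j (fst ((fst a' j, snd a' j), (\<lambda>k. if k = j then 0 else fst a' k),
        (\<lambda>k. if k = j then 0 else snd a' k))))
        (snd ((fst a' j, snd a' j), (\<lambda>k. if k = j then 0 else fst a' k), (\<lambda>k. if k = j then 0 else snd a' k))) = a'"
    by (auto simp: vadd_def dl_def fun_eq_iff prod_eq_iff)
  show "(\<lambda>p. vadd (dl j (fst p)) (snd p)) ` (UNIV \<times> VI n J) \<subseteq> VI n (insert j J)"
    using j by (auto simp: VI_def vadd_def dl_def sympl_vecs_def fq_vecs_def)
  show "(\<lambda>w. ((fst w j, snd w j), (\<lambda>k. if k = j then 0 else fst w k), (\<lambda>k. if k = j then 0 else snd w k))) ` VI n (insert j J)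
        \<subseteq> UNIV \<times> VI n J"
    by (auto simp: VI_def sympl_vecs_def fq_vecs_def)
qed

lemma dl_V: "j \<in> {1..n} \<Longrightarrow> dl j p \<in> sympl_vecs n"
  by (auto simp: dl_def sympl_vecs_def fq_vecs_def)

lemma op_sum_singleton [simp]: "op_sum n f {a} = canon n (f a)"
  by (auto simp: op_sum_def canon_def fun_eq_iff)

lemma cj_pauli_mult:
  fixes u v :: "(nat \<Rightarrow> 'a::{finite,field}) \<times> (nat \<Rightarrow> 'a)"
  assumes u: "u \<in> sympl_vecs n" and v: "v \<in> sympl_vecs n"
  shows "cj n (pauli n u) (cj n (pauli n v) X) = cj n (pauli n (vadd u v)) X"
proof -
  have "cj n (pauli n u) (cj n (pauli n v) X) = cj n (op_mult n (pauli n u) (pauli n v)) X"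
    by (simp add: cj_mult)
  also have "\<dots> = cj n (pauli n (vadd u v)) X"
    by (simp add: pauli_mult[OF u v] cj_smult)
  finally show ?thesis .
qed

lemma depol_sum:
  fixes X :: "'a::{finite,field} qop"
  shows "depol_at n j X = op_smult n (1 / of_nat CARD('a) ^ 2) (op_sum n (\<lambda>p. cj n (pauli n (dl j p)) X) UNIV)"
proof -
  have "(\<lambda>(a, b). op_mult n (op_mult n (pauli_at n j a b) X) (op_adj n (pauli_at n j a b)))
     = (\<lambda>p. cj n (pauli n (dl j p)) X)"
    by (intro ext) (simp add: split_def pauli_at_def dl_def cj_def)
  then show ?thesis by (simp add: depol_at_def)
qed

lemma foldr_depol:
  fixes rho :: "'a::{finite,field} qop"
  assumes "distinct js" "set js \<subseteq> {1..n}"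
  shows "foldr (depol_at n) js (canon n rho)
       = op_smult n ((1 / of_nat CARD('a) ^ 2) ^ length js) (op_sum n (\<lambda>u. cj n (pauli n u) rho) (VI n (set js)))
     \<and> card (VI n (set js) :: ((nat \<Rightarrow> 'a) \<times> (nat \<Rightarrow> 'a)) set) = CARD('a) ^ (2 * length js)"
  using assms
proof (induction js)
  case Nil
  then show ?case by (simp add: VI_empty pauli_vzero)
next
  case (Cons j js)
  let ?J = "set js" and ?q = "1 / of_nat CARD('a) ^ 2 :: complex"
  let ?g = "\<lambda>u. cj n (pauli n u) rho"
  have j: "j \<in> {1..n}" and jJ: "j \<notin> ?J" using Cons.prems by auto
  have IH: "foldr (depol_at n) js (canon n rho) = op_smult n (?q ^ length js) (op_sum n ?g (VI n ?J))"
      and IHc: "card (VI n ?J :: ((nat \<Rightarrow> 'a) \<times> (nat \<Rightarrow> 'a)) set) = CARD('a) ^ (2 * length js)"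
    using Cons by auto
  have bij: "bij_betw (\<lambda>p. vadd (dl j (fst p)) (snd p)) (UNIV \<times> VI n ?J) (VI n (insert j ?J) :: ((nat \<Rightarrow> 'a) \<times> (nat \<Rightarrow> 'a)) set)"
    by (rule bij_VI[OF j jJ])
  have "foldr (depol_at n) (j # js) (canon n rho)
      = depol_at n j (op_smult n (?q ^ length js) (op_sum n ?g (VI n ?J)))"
    using IH by simp
  also have "\<dots> = op_smult n ?q (op_sum n (\<lambda>p. op_smult n (?q ^ length js)
        (op_sum n (\<lambda>u. ?g (vadd (dl j p) u)) (VI n ?J))) UNIV)"
    unfolding depol_sum
    by (intro arg_cong[where f="op_smult n ?q"] op_sum_cong)
       (simp add: cj_smultX cj_sum cj_pauli_mult[OF dl_V[OF j] VI_V] cong: op_sum_cong)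
  also have "\<dots> = op_smult n (?q ^ length (j # js)) (op_sum n (\<lambda>p. op_sum n (\<lambda>u. ?g (vadd (dl j p) u)) (VI n ?J)) UNIV)"
    by (simp add: smult_sum[symmetric] mult.commute)
  also have "op_sum n (\<lambda>p. op_sum n (\<lambda>u. ?g (vadd (dl j p) u)) (VI n ?J)) UNIV
      = op_sum n (\<lambda>p. ?g (vadd (dl j (fst p)) (snd p))) (UNIV \<times> VI n ?J)"
    by (rule op_sum_Sigma) (auto simp: finite_VI)
  also have "\<dots> = op_sum n ?g (VI n (insert j ?J))"
    by (rule op_sum_reindex_bij[OF bij])
  finally have A: "foldr (depol_at n) (j # js) (canon n rho) = op_smult n (?q ^ length (j # js)) (op_sum n ?g (VI n (set (j # js))))"
    by simp
  have "card (VI n (insert j ?J) :: ((nat \<Rightarrow> 'a) \<times> (nat \<Rightarrow> 'a)) set) = card ((UNIV :: ('a \<times> 'a) set) \<times> (VI n ?J :: ((nat \<Rightarrow> 'a) \<times> (nat \<Rightarrow> 'a)) set))"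
    using bij_betw_same_card[OF bij] by (rule sym)
  also have "\<dots> = CARD('a) ^ 2 * CARD('a) ^ (2 * length js)"
    by (simp add: card_cartesian_product IHc power2_eq_square)
  finally have B: "card (VI n (set (j # js)) :: ((nat \<Rightarrow> 'a) \<times> (nat \<Rightarrow> 'a)) set) = CARD('a) ^ (2 * length (j # js))"
    by (simp add: power_add[symmetric])
  show ?case using A B by blast
qed

lemma erasure_formula:
  fixes rho :: "'a::{finite,field} qop"
  assumes I: "I \<subseteq> {1..n}"
  shows "erasure_channel n I rho
       = op_smult n (1 / of_nat (card (VI n I :: ((nat \<Rightarrow> 'a) \<times> (nat \<Rightarrow> 'a)) set)))
           (op_sum n (\<lambda>u. cj n (pauli n u) rho) (VI n I))"
proof -
  have fin: "finite I" using I finite_subset by blast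
  let ?js = "sorted_list_of_set I"
  have d: "distinct ?js" and s: "set ?js = I" using fin by auto
  have F: "foldr (depol_at n) ?js (canon n rho)
       = op_smult n ((1 / of_nat CARD('a) ^ 2) ^ length ?js) (op_sum n (\<lambda>u. cj n (pauli n u) rho) (VI n I))"
      and Cd: "card (VI n I :: ((nat \<Rightarrow> 'a) \<times> (nat \<Rightarrow> 'a)) set) = CARD('a) ^ (2 * length ?js)"
    using foldr_depol[OF d, of n rho] s I by auto
  have "(1 / of_nat CARD('a) ^ 2 :: complex) ^ length ?js = 1 / of_nat (CARD('a) ^ (2 * length ?js))"
    by (simp add: power_mult power_one_over)
  then show ?thesis unfolding erasure_channel_def F Cd by simp
qed

lemma card_VI_pos: "card (VI n I :: ((nat \<Rightarrow> 'a::{finite,zero}) \<times> (nat \<Rightarrow> 'a)) set) > 0"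
proof -
  have "vzero \<in> (VI n I :: ((nat \<Rightarrow> 'a) \<times> (nat \<Rightarrow> 'a)) set)" by (simp add: VI_def vzero_def sympl_vecs_def fq_vecs_def)
  then show ?thesis using finite_VI by (auto simp: card_gt_0_iff)
qed


lemma cop_outer [simp]: "cop n (outer n v)" by (simp add: outer_def)

lemma outer_entry: "x \<in> basis_idx n \<Longrightarrow> y \<in> basis_idx n \<Longrightarrow> outer n v x y = v x * cnj (v y)"
  by (simp add: outer_def canon_def)

lemma mult_outer_left: "op_mult n A (outer n v) = canon n (\<lambda>x y. op_apply n A v x * cnj (v y))"
  by (auto simp: op_mult_def outer_def canon_def op_apply_def fun_eq_iff sum_distrib_right mult.assoc intro!: sum.cong)

lemma mult_outer_right: "op_mult n (outer n v) A = canon n (\<lambda>x y. v x * cnj (op_apply n (op_adj n A) v y))"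
  by (auto simp: op_mult_def outer_def canon_def op_apply_def op_adj_def fun_eq_iff sum_distrib_left mult.assoc mult.commute intro!: sum.cong)

lemma outer_apply: "outer n (op_apply n A v) = cj n A (outer n v)"
proof -
  have "cj n A (outer n v) = op_mult n (canon n (\<lambda>x y. op_apply n A v x * cnj (v y))) (op_adj n A)"
    by (simp add: cj_def mult_outer_left)
  also have "\<dots> = canon n (\<lambda>x y. op_apply n A v x * cnj (op_apply n A v y))"
    by (auto simp: op_mult_def canon_def op_adj_def op_apply_def fun_eq_iff sum_distrib_left mult.assoc mult.commute intro!: sum.cong)
  also have "\<dots> = outer n (op_apply n A v)"
    by (auto simp: outer_def canon_def fun_eq_iff)
  finally show ?thesis by simp
qed

lemma apply_add: "op_apply n A (\<lambda>x. v x + w x) = (\<lambda>x. op_apply n A v x + op_apply n A w x)"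
  by (auto simp: op_apply_def fun_eq_iff distrib_left sum.distrib)

lemma apply_scal: "op_apply n A (\<lambda>x. c * v x) = (\<lambda>x. c * op_apply n A v x)"
  by (auto simp: op_apply_def fun_eq_iff sum_distrib_left mult_ac)

lemma qvecs_add: "v \<in> qvecs n \<Longrightarrow> w \<in> qvecs n \<Longrightarrow> (\<lambda>x. v x + w x) \<in> qvecs n"
  by (simp add: qvecs_def)
lemma qvecs_scal: "v \<in> qvecs n \<Longrightarrow> (\<lambda>x. c * v x) \<in> qvecs n"
  by (simp add: qvecs_def)

lemma add_neg_self: "cop n A \<Longrightarrow> op_add n A (op_smult n (-1) A) = (\<lambda>x y. 0)"
  apply (rule op_eqI[where n=n])
    apply simp
   apply simp
  by (auto simp: op_add_def op_smult_def canon_def)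

lemma smult_zeroop [simp]: "op_smult n c (\<lambda>x y. 0) = (\<lambda>x y. 0)"
  by (auto simp: op_smult_def canon_def fun_eq_iff)

lemma sum_if_op:
  assumes "finite S"
  shows "op_sum n (\<lambda>e. if P e then X else (\<lambda>x y. 0)) S = op_smult n (of_nat (card {e \<in> S. P e})) X"
proof -
  have *: "(\<Sum>i\<in>S. (if P i then X else (\<lambda>x y. 0)) x y) = of_nat (card {e\<in>S. P e}) * X x y" for x y
  proof -
    have "(\<Sum>i\<in>S. (if P i then X else (\<lambda>x y. 0)) x y) = (\<Sum>i\<in>S. if P i then X x y else 0)"
      by (intro sum.cong) auto
    also have "\<dots> = (\<Sum>i\<in>{e\<in>S. P e}. X x y)" by (rule sum.inter_filter[OF assms, symmetric])
    also have "\<dots> = of_nat (card {e\<in>S. P e}) * X x y" by simp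
    finally show ?thesis .
  qed
  show ?thesis by (auto simp: op_sum_def op_smult_def canon_def fun_eq_iff *)
qed

lemma R_props:
  fixes T :: "'a::{finite,zero} qop"
  assumes cT: "cop n T" and hT: "op_adj n T = T" and iT: "op_mult n T T = T"
  defines "R \<equiv> op_add n (op_id n) (op_smult n (-1) T)"
  shows "op_mult n (op_adj n R) R = R" and "op_add n R T = op_id n"
proof -
  have cR: "cop n R" by (simp add: R_def)
  have aR: "op_adj n R = R" by (simp add: R_def adj_add adj_smult hT)
  have TR: "op_mult n T R = (\<lambda>x y. 0)"
    using cT by (simp add: R_def mult_add_right mult_smult_right iT add_neg_self)
  have "op_mult n R R = op_add n R (op_smult n (-1) (op_mult n T R))"
    using cR by (simp add: R_def mult_add_left mult_smult_left)
  also have "\<dots> = R" using cR by (simp add: TR)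
  finally show "op_mult n (op_adj n R) R = R" using aR by simp
  show "op_add n R T = op_id n"
    apply (rule op_eqI[where n=n])
      apply simp
     apply simp
    using cT by (auto simp: R_def op_add_def op_smult_def op_id_def canon_def)
qed

lemma op_sum_list:
  assumes "distinct es"
  shows "op_sum n (\<lambda>i. F ((R # map G es) ! i)) {..<length (R # map G es)}
       = op_add n (F R) (op_sum n (\<lambda>e. F (G e)) (set es))"
proof -
  have "\<And>x y. (\<Sum>i<length es. F (map G es ! i) x y) = (\<Sum>e\<in>set es. F (G e) x y)"
  proof -
    fix x y
    have "(\<Sum>i<length es. F (map G es ! i) x y) = (\<Sum>i<length es. F (G (es ! i)) x y)" by simp
    also have "\<dots> = (\<Sum>e\<in>set es. F (G e) x y)"
      by (rule sum.reindex_bij_betw[OF bij_betw_nth[OF assms refl refl], of "\<lambda>e. F (G e) x y"])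
    finally show "(\<Sum>i<length es. F (map G es ! i) x y) = (\<Sum>e\<in>set es. F (G e) x y)" .
  qed
  then show ?thesis
    by (auto simp: op_sum_def op_add_def canon_def fun_eq_iff sum.lessThan_Suc_shift simp del: sum.lessThan_Suc)
qed

lemma adj_cj: "op_adj n (cj n E X) = cj n E (op_adj n X)"
  by (simp add: cj_def adj_mult mult_assoc)


locale stabI = stab +
  fixes I :: "nat set"
  assumes I_sub: "I \<subseteq> {1..n}"
begin

abbreviation "VIs \<equiv> (VI n I :: ((nat \<Rightarrow> 'a) \<times> (nat \<Rightarrow> 'a)) set)"

lemma VIs_V: "e \<in> VIs \<Longrightarrow> e \<in> sympl_vecs n" by (rule VI_V)

lemma outer_Pj_left: "\<phi> \<in> stab_code n C lam \<Longrightarrow> op_mult n Pj (outer n \<phi>) = outer n \<phi>"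
proof -
  assume phi: "\<phi> \<in> stab_code n C lam"
  have "op_mult n Pj (outer n \<phi>) = canon n (\<lambda>x y. op_apply n Pj \<phi> x * cnj (\<phi> y))" by (rule mult_outer_left)
  also have "\<dots> = outer n \<phi>" using Q_imp_Pj[OF phi] by (simp add: outer_def)
  finally show ?thesis .
qed

lemma outer_Pj_right: "\<phi> \<in> stab_code n C lam \<Longrightarrow> op_mult n (outer n \<phi>) Pj = outer n \<phi>"
proof -
  assume phi: "\<phi> \<in> stab_code n C lam"
  have "op_mult n (outer n \<phi>) Pj = canon n (\<lambda>x y. \<phi> x * cnj (op_apply n (op_adj n Pj) \<phi> y))" by (rule mult_outer_right)
  also have "\<dots> = outer n \<phi>" using Q_imp_Pj[OF phi] by (simp add: outer_def Pj_herm)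
  finally show ?thesis .
qed

lemma K1:
  assumes e: "e \<in> VIs" and g: "g \<in> VIs"
  shows "\<exists>\<alpha>. cnj \<alpha> * \<alpha> = 1 \<and> op_mult n (op_adj n (pauli n e)) (pauli n g) = op_smult n \<alpha> (pauli n (vsub g e))"
  using pauli_adj_mult[OF VIs_V[OF e] VIs_V[OF g]] by (intro exI[of _ "cnj (chi (dot n (snd e) (fst (vsub g e))))"]) simp

end

locale stabH = stabI +
  assumes H: "\<And>w. w \<in> VIs \<Longrightarrow> w \<in> sympl_dual n C \<Longrightarrow> w \<in> C"
begin

lemma K2:
  assumes w: "w \<in> VIs"
  shows "op_mult n Pj (op_mult n (pauli n w) Pj) = op_smult n (if w \<in> C then lam (pauli n w) else 0) Pj"
proof (cases "w \<in> C")
  case True then show ?thesis by (simp add: PEP_C)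
next
  case False
  then have "w \<notin> sympl_dual n C" using H[OF w] by blast
  then show ?thesis using PEP_zero[OF VIs_V[OF w]] False by simp
qed

definition CI where "CI = C \<inter> VIs"
definition k where "k = card CI"

lemma k_pos: "k > 0"
proof -
  have "vzero \<in> CI" using zero_C by (simp add: CI_def VI_def vzero_def sympl_vecs_def fq_vecs_def)
  moreover have "finite CI" using finite_C by (simp add: CI_def)
  ultimately show ?thesis by (auto simp: k_def card_gt_0_iff)
qed

lemma card_match:
  assumes g: "g \<in> VIs"
  shows "card {e \<in> VIs. vsub g e \<in> C} = k"
proof -
  have "bij_betw (\<lambda>e. vsub g e) {e \<in> VIs. vsub g e \<in> C} CI"
  proof (rule bij_betw_byWitness[of _ "\<lambda>e. vsub g e"])
    show "\<forall>a\<in>{e \<in> VIs. vsub g e \<in> C}. vsub g (vsub g a) = a"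
      by (auto simp: vsub_def)
    show "\<forall>a\<in>CI. vsub g (vsub g a) = a" by (auto simp: vsub_def)
    show "(\<lambda>e. vsub g e) ` {e \<in> VIs. vsub g e \<in> C} \<subseteq> CI"
      using g by (auto simp: CI_def intro: VI_vsub)
    show "(\<lambda>e. vsub g e) ` CI \<subseteq> {e \<in> VIs. vsub g e \<in> C}"
    proof
      fix x assume "x \<in> (\<lambda>e. vsub g e) ` CI"
      then obtain c where c: "c \<in> CI" and x: "x = vsub g c" by blast
      have "x \<in> VIs" using c g x by (auto simp: CI_def intro: VI_vsub)
      moreover have "vsub g x = c" using x by (auto simp: vsub_def)
      ultimately show "x \<in> {e \<in> VIs. vsub g e \<in> C}" using c by (auto simp: CI_def)
    qed
  qed
  then show ?thesis by (simp add: k_def bij_betw_same_card)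
qed

lemma T_term:
  assumes e: "e \<in> VIs" and g: "g \<in> VIs"
  shows "op_mult n (cj n (pauli n e) Pj) (op_mult n (pauli n g) Pj)
       = (if vsub g e \<in> C then op_mult n (pauli n g) Pj else (\<lambda>x y. 0))"
proof -
  let ?w = "vsub g e"
  obtain \<alpha> where a: "cnj \<alpha> * \<alpha> = 1" and ea: "op_mult n (op_adj n (pauli n e)) (pauli n g) = op_smult n \<alpha> (pauli n ?w)"
    using K1[OF e g] by blast
  have w: "?w \<in> VIs" using e g by (intro VI_vsub)
  have "op_mult n (cj n (pauli n e) Pj) (op_mult n (pauli n g) Pj)
      = op_mult n (pauli n e) (op_mult n Pj (op_mult n (op_mult n (op_adj n (pauli n e)) (pauli n g)) Pj))"
    by (simp add: cj_def mult_assoc)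
  also have "\<dots> = op_smult n (\<alpha> * (if ?w \<in> C then lam (pauli n ?w) else 0)) (op_mult n (pauli n e) Pj)"
    by (simp add: ea mult_smult_left mult_smult_right K2[OF w])
  also have "\<dots> = (if ?w \<in> C then op_mult n (pauli n g) Pj else (\<lambda>x y. 0))"
  proof (cases "?w \<in> C")
    case True
    have "op_mult n (pauli n g) Pj = op_mult n (op_mult n (pauli n e) (op_mult n (op_adj n (pauli n e)) (pauli n g))) Pj"
      by (simp add: mult_assoc[symmetric] pauli_unitary2[OF VIs_V[OF e]])
    also have "\<dots> = op_smult n (\<alpha> * lam (pauli n ?w)) (op_mult n (pauli n e) Pj)"
      by (simp add: ea mult_smult_left mult_smult_right mult_assoc Pj_gen[OF True])
    finally show ?thesis using True by simp
  qed simp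
  finally show ?thesis .
qed

definition T :: "'a qop" where
  "T = op_smult n (1 / of_nat k) (op_sum n (\<lambda>e. cj n (pauli n e) Pj) VIs)"

lemma cop_T [simp]: "cop n T" by (simp add: T_def)

lemma T1: "g \<in> VIs \<Longrightarrow> op_mult n T (op_mult n (pauli n g) Pj) = op_mult n (pauli n g) Pj"
proof -
  assume g: "g \<in> VIs"
  have "op_mult n T (op_mult n (pauli n g) Pj)
      = op_smult n (1 / of_nat k) (op_sum n (\<lambda>e. if vsub g e \<in> C then op_mult n (pauli n g) Pj else (\<lambda>x y. 0)) VIs)"
    unfolding T_def mult_smult_left mult_sum_left
    by (intro arg_cong[where f="op_smult n _"] op_sum_cong) (simp add: T_term g)
  also have "\<dots> = op_mult n (pauli n g) Pj"
    using k_pos by (simp add: sum_if_op finite_VI card_match[OF g])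
  finally show ?thesis .
qed

lemma T_herm: "op_adj n T = T"
  by (simp add: T_def adj_smult adj_sum adj_cj Pj_herm)

lemma T_idem: "op_mult n T T = T"
proof -
  have "op_mult n T (cj n (pauli n e) Pj) = cj n (pauli n e) Pj" if e: "e \<in> VIs" for e
  proof -
    have "op_mult n T (cj n (pauli n e) Pj) = op_mult n (op_mult n T (op_mult n (pauli n e) Pj)) (op_adj n (pauli n e))"
      by (simp only: cj_def mult_assoc)
    also have "\<dots> = cj n (pauli n e) Pj" by (simp only: T1[OF e] cj_def)
    finally show ?thesis .
  qed
  then show ?thesis
    unfolding T_def[of] mult_smult_right mult_sum_right
    by (simp add: T_def[symmetric] cong: op_sum_cong)
qed

definition R :: "'a qop" where "R = op_add n (op_id n) (op_smult n (-1) T)"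

lemma R_tp: "op_mult n (op_adj n R) R = R" and R_T: "op_add n R T = op_id n"
  using R_props[OF cop_T T_herm T_idem] by (simp_all add: R_def)

lemma R_kill: "g \<in> VIs \<Longrightarrow> op_mult n R (op_mult n (pauli n g) Pj) = (\<lambda>x y. 0)"
  by (simp add: R_def mult_add_left mult_smult_left T1 add_neg_self)

definition cc :: complex where "cc = complex_of_real (1 / sqrt (real k))"

lemma cc_sq: "cnj cc * cc = 1 / of_nat k"
proof -
  have "(1 / sqrt (real k)) * (1 / sqrt (real k)) = 1 / real k"
    using k_pos by (simp add: real_sqrt_mult_self)
  then have "complex_of_real (1 / sqrt (real k)) * complex_of_real (1 / sqrt (real k)) = complex_of_real (1 / real k)"
    by (simp only: of_real_mult[symmetric])
  then show ?thesis by (simp only: cc_def complex_cnj_complex_of_real) simp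
qed

lemma cc_sq': "cc * cnj cc = 1 / of_nat k"
  using cc_sq by (simp add: mult.commute)

definition Ke :: "(nat \<Rightarrow> 'a) \<times> (nat \<Rightarrow> 'a) \<Rightarrow> 'a qop" where
  "Ke e = op_smult n cc (op_mult n Pj (op_adj n (pauli n e)))"

lemma Ke_tp: "op_mult n (op_adj n (Ke e)) (Ke e) = op_smult n (1 / of_nat k) (cj n (pauli n e) Pj)"
proof -
  have "op_mult n (op_adj n (Ke e)) (Ke e)
      = op_smult n (cc * cnj cc) (op_mult n (pauli n e) (op_mult n Pj (op_mult n Pj (op_adj n (pauli n e)))))"
    by (simp add: Ke_def adj_smult adj_mult Pj_herm mult_smult_left mult_smult_right mult_assoc)
  also have "op_mult n Pj (op_mult n Pj (op_adj n (pauli n e))) = op_mult n Pj (op_adj n (pauli n e))"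
    by (simp add: mult_assoc[symmetric] Pj_idem)
  finally show ?thesis by (simp add: cc_sq' cj_def mult_assoc)
qed

definition es where "es = (SOME xs. distinct xs \<and> set xs = VIs)"

lemma es: "distinct es" "set es = VIs"
proof -
  have "\<exists>xs. distinct xs \<and> set xs = VIs" using finite_distinct_list[OF finite_VI] by blast
  then have "distinct es \<and> set es = VIs" unfolding es_def by (rule someI_ex)
  then show "distinct es" "set es = VIs" by auto
qed

definition Ks where "Ks = R # map Ke es"

lemma Ks_tp: "kraus_tp n Ks"
proof -
  have "op_sum n (\<lambda>i. op_mult n (op_adj n (Ks ! i)) (Ks ! i)) {..<length Ks}
      = op_add n (op_mult n (op_adj n R) R) (op_sum n (\<lambda>e. op_mult n (op_adj n (Ke e)) (Ke e)) VIs)"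
    unfolding Ks_def using op_sum_list[OF es(1), of n "\<lambda>K. op_mult n (op_adj n K) K" R Ke] es(2) by simp
  also have "\<dots> = op_add n R T"
    by (simp add: R_tp Ke_tp T_def smult_sum)
  also have "\<dots> = op_id n" by (rule R_T)
  finally show ?thesis by (simp add: kraus_tp_def)
qed

lemma recover:
  assumes phi: "\<phi> \<in> stab_code n C lam"
  shows "kraus_apply n Ks (erasure_channel n I (outer n \<phi>)) = outer n \<phi>"
proof -
  let ?r = "outer n \<phi>"
  let ?V = "of_nat (card VIs) :: complex"
  have rl: "op_mult n Pj ?r = ?r" and rr: "op_mult n ?r Pj = ?r" using outer_Pj_left[OF phi] outer_Pj_right[OF phi] by auto
  have G: "erasure_channel n I ?r = op_smult n (1 / ?V) (op_sum n (\<lambda>g. cj n (pauli n g) ?r) VIs)"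
    by (rule erasure_formula[OF I_sub])
  have kR: "cj n R (cj n (pauli n g) ?r) = (\<lambda>x y. 0)" if g: "g \<in> VIs" for g
  proof -
    have "op_mult n (op_mult n R (pauli n g)) ?r = op_mult n (op_mult n R (op_mult n (pauli n g) Pj)) ?r"
      by (simp add: mult_assoc rl)
    then have z: "op_mult n (op_mult n R (pauli n g)) ?r = (\<lambda>x y. 0)" by (simp add: R_kill[OF g])
    have "cj n R (cj n (pauli n g) ?r) = cj n (op_mult n R (pauli n g)) ?r" by (simp only: cj_mult)
    also have "\<dots> = (\<lambda>x y. 0)" by (simp only: cj_def z mult_zeroop_left)
    finally show ?thesis .
  qed
  have kE: "cj n (Ke e) (cj n (pauli n g) ?r) = op_smult n (1 / of_nat k * (if vsub g e \<in> C then 1 else 0)) ?r"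
    if e: "e \<in> VIs" and g: "g \<in> VIs" for e g
  proof -
    let ?w = "vsub g e"
    let ?Y = "op_mult n (op_adj n (pauli n e)) (pauli n g)"
    obtain \<alpha> where a: "cnj \<alpha> * \<alpha> = 1" and ea: "?Y = op_smult n \<alpha> (pauli n ?w)"
      using K1[OF e g] by blast
    have w: "?w \<in> VIs" using e g by (intro VI_vsub)
    define \<gamma> where "\<gamma> = \<alpha> * (if ?w \<in> C then lam (pauli n ?w) else 0)"
    have Z: "op_mult n Pj (op_mult n ?Y Pj) = op_smult n \<gamma> Pj"
      by (simp add: ea mult_smult_left mult_smult_right K2[OF w] \<gamma>_def)
    have g2: "cnj \<gamma> * \<gamma> = (if ?w \<in> C then 1 else 0)"
    proof (cases "?w \<in> C")
      case True
      have "cnj \<gamma> * \<gamma> = (cnj \<alpha> * \<alpha>) * (cnj (lam (pauli n ?w)) * lam (pauli n ?w))"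
        using True by (simp add: \<gamma>_def mult_ac)
      then show ?thesis using a lam_unit[OF True] True by simp
    qed (simp add: \<gamma>_def)
    have "cj n (Ke e) (cj n (pauli n g) ?r) = cj n (op_mult n (Ke e) (pauli n g)) ?r"
      by (simp add: cj_mult)
    also have "op_mult n (Ke e) (pauli n g) = op_smult n cc (op_mult n Pj ?Y)"
      by (simp add: Ke_def mult_smult_left mult_assoc)
    also have "cj n (op_smult n cc (op_mult n Pj ?Y)) ?r = op_smult n (cc * cnj cc) (cj n (op_mult n Pj ?Y) ?r)"
      by (rule cj_smult)
    also have "cj n (op_mult n Pj ?Y) ?r = cj n (op_mult n Pj (op_mult n ?Y Pj)) ?r"
    proof -
      have A: "op_mult n (op_mult n Pj ?Y) ?r = op_mult n (op_mult n Pj (op_mult n ?Y Pj)) ?r"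
        by (simp add: mult_assoc rl)
      have B: "op_mult n ?r (op_adj n (op_mult n Pj ?Y)) = op_mult n ?r (op_adj n (op_mult n Pj (op_mult n ?Y Pj)))"
      proof -
        have "op_mult n ?r (op_adj n (op_mult n Pj ?Y)) = op_mult n (op_mult n ?r Pj) (op_mult n (op_adj n ?Y) Pj)"
          by (simp add: rr adj_mult Pj_herm)
        also have "\<dots> = op_mult n ?r (op_adj n (op_mult n Pj (op_mult n ?Y Pj)))"
          by (simp add: adj_mult Pj_herm mult_assoc)
        finally show ?thesis .
      qed
      show ?thesis unfolding cj_def using A B by (simp add: mult_assoc)
    qed
    also have "\<dots> = op_smult n (\<gamma> * cnj \<gamma>) (cj n Pj ?r)" by (simp add: Z cj_smult)
    also have "cj n Pj ?r = ?r" by (simp add: cj_def rl rr Pj_herm)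
    finally show ?thesis using g2 cc_sq by (simp add: mult_ac)
  qed
  have "kraus_apply n Ks (erasure_channel n I ?r)
      = op_add n (cj n R (erasure_channel n I ?r)) (op_sum n (\<lambda>e. cj n (Ke e) (erasure_channel n I ?r)) VIs)"
    unfolding kraus_apply_def Ks_def
    using op_sum_list[OF es(1), of n "\<lambda>K. cj n K (erasure_channel n I ?r)" R Ke] es(2) by (simp add: cj_def)
  also have "cj n R (erasure_channel n I ?r) = (\<lambda>x y. 0)"
    by (simp add: G cj_smultX cj_sum kR op_sum_zero)
  also have "op_sum n (\<lambda>e. cj n (Ke e) (erasure_channel n I ?r)) VIs
      = op_sum n (\<lambda>e. op_smult n (1 / ?V) (op_sum n (\<lambda>g. op_smult n (1 / of_nat k * (if vsub g e \<in> C then 1 else 0)) ?r) VIs)) VIs"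
    by (intro op_sum_cong) (simp add: G cj_smultX cj_sum kE cong: op_sum_cong)
  also have "\<dots> = op_smult n (\<Sum>e\<in>VIs. 1 / ?V * (\<Sum>g\<in>VIs. 1 / of_nat k * (if vsub g e \<in> C then 1 else 0))) ?r"
    by (simp add: sum_smult_const)
  also have "(\<Sum>e\<in>VIs. 1 / ?V * (\<Sum>g\<in>VIs. 1 / of_nat k * (if vsub g e \<in> C then 1 else 0))) = 1"
  proof -
    let ?f = "\<lambda>g e. (if vsub g e \<in> C then 1 else 0 :: complex)"
    have "(\<Sum>e\<in>VIs. 1 / ?V * (\<Sum>g\<in>VIs. 1 / of_nat k * ?f g e))
        = (\<Sum>e\<in>VIs. 1 / ?V * (1 / of_nat k) * (\<Sum>g\<in>VIs. ?f g e))"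
      by (simp only: sum_distrib_left mult.assoc)
    also have "\<dots> = 1 / ?V * (1 / of_nat k) * (\<Sum>e\<in>VIs. \<Sum>g\<in>VIs. ?f g e)"
      by (simp only: sum_distrib_left)
    also have "(\<Sum>e\<in>VIs. \<Sum>g\<in>VIs. ?f g e) = (\<Sum>g\<in>VIs. \<Sum>e\<in>VIs. ?f g e)"
      by (rule sum.swap)
    finally have "(\<Sum>e\<in>VIs. 1 / ?V * (\<Sum>g\<in>VIs. 1 / of_nat k * ?f g e))
        = 1 / ?V * (1 / of_nat k) * (\<Sum>g\<in>VIs. \<Sum>e\<in>VIs. ?f g e)" .
    also have "(\<Sum>g\<in>VIs. \<Sum>e\<in>VIs. (if vsub g e \<in> C then 1 else 0 :: complex)) = (\<Sum>g\<in>VIs. of_nat k)"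
    proof (rule sum.cong)
      fix g assume g: "g \<in> VIs"
      have "(\<Sum>e\<in>VIs. (if vsub g e \<in> C then 1 else 0 :: complex)) = of_nat (card {e \<in> VIs. vsub g e \<in> C})"
      proof -
        have "(\<Sum>e\<in>VIs. (if vsub g e \<in> C then 1 else 0 :: complex)) = (\<Sum>e\<in>{e \<in> VIs. vsub g e \<in> C}. 1)"
          by (rule sum.inter_filter[OF finite_VI, symmetric])
        then show ?thesis by simp
      qed
      then show "(\<Sum>e\<in>VIs. (if vsub g e \<in> C then 1 else 0 :: complex)) = of_nat k" using card_match[OF g] by simp
    qed simp
    also have "\<dots> = ?V * of_nat k" by simp
    finally show ?thesis using k_pos card_VI_pos[of n I] by simp
  qed
  finally show ?thesis by simp
qed

lemma corrects: "corrects_erasures n (stab_code n C lam) I"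
  unfolding corrects_erasures_def using Ks_tp recover by blast

end


lemma polar:
  fixes P Q R S p q r s :: complex
  assumes e1: "P * cnj R = p * cnj r" and e2: "Q * cnj S = q * cnj s"
    and e3: "(P + Q) * cnj (R + S) = (p + q) * cnj (r + s)"
    and e4: "(P + \<i> * Q) * cnj (R + \<i> * S) = (p + \<i> * q) * cnj (r + \<i> * s)"
  shows "P * cnj S = p * cnj s"
proof -
  have h3: "P * cnj S + Q * cnj R = p * cnj s + q * cnj r"
    using e3 e1 e2 by (simp add: algebra_simps)
  have "(P + \<i> * Q) * cnj (R + \<i> * S) = P * cnj R + Q * cnj S + \<i> * (Q * cnj R - P * cnj S)"
    by (simp add: algebra_simps)
  moreover have "(p + \<i> * q) * cnj (r + \<i> * s) = p * cnj r + q * cnj s + \<i> * (q * cnj r - p * cnj s)"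
    by (simp add: algebra_simps)
  ultimately have "\<i> * (Q * cnj R - P * cnj S) = \<i> * (q * cnj r - p * cnj s)"
    using e4 e1 e2 by simp
  then have h4: "Q * cnj R - P * cnj S = q * cnj r - p * cnj s" by simp
  have "(P * cnj S + Q * cnj R) - (Q * cnj R - P * cnj S) = (p * cnj s + q * cnj r) - (q * cnj r - p * cnj s)"
    using h3 h4 by simp
  then have "2 * (P * cnj S) = 2 * (p * cnj s)" by (simp add: algebra_simps mult_2)
  then show ?thesis by simp
qed

context stabI
begin

lemma Q_add: "v \<in> stab_code n C lam \<Longrightarrow> w \<in> stab_code n C lam \<Longrightarrow> (\<lambda>x. v x + w x) \<in> stab_code n C lam"
  unfolding Q_iff by (simp add: apply_add qvecs_add)

lemma Q_scal: "v \<in> stab_code n C lam \<Longrightarrow> (\<lambda>x. c * v x) \<in> stab_code n C lam"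
  unfolding Q_iff by (simp add: apply_scal qvecs_scal)

lemma tr_mult_sum: "tr n (op_mult n A (op_sum n f S)) = (\<Sum>i\<in>S. tr n (op_mult n A (f i)))"
  by (simp add: mult_sum_right tr_sum)

lemma fwd:
  assumes corr: "corrects_erasures n (stab_code n C lam) I"
    and L: "L \<in> VIs" and Ld: "L \<in> sympl_dual n C" and LC: "L \<notin> C"
  shows False
proof -
  obtain Ks where rec: "\<And>\<phi>. \<phi> \<in> stab_code n C lam \<Longrightarrow> kraus_apply n Ks (erasure_channel n I (outer n \<phi>)) = outer n \<phi>"
    using corr unfolding corrects_erasures_def by blast
  have LV: "L \<in> sympl_vecs n" using VI_V[OF L] .
  let ?A = "op_apply n (pauli n L)"
  have AQ: "?A \<phi> \<in> stab_code n C lam" if phi: "\<phi> \<in> stab_code n C lam" for \<phi>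
  proof -
    have "op_apply n Pj (?A \<phi>) = op_apply n (op_mult n Pj (pauli n L)) \<phi>" by (simp add: apply_mult)
    also have "\<dots> = ?A (op_apply n Pj \<phi>)" by (simp add: dual_comm_Pj[OF Ld, symmetric] apply_mult)
    also have "\<dots> = ?A \<phi>" using Q_imp_Pj[OF phi] by simp
    finally show ?thesis using Q_iff by simp
  qed
  have Gam: "erasure_channel n I (cj n (pauli n L) X) = erasure_channel n I X" for X
  proof -
    have "op_sum n (\<lambda>g. cj n (pauli n g) (cj n (pauli n L) X)) VIs = op_sum n (\<lambda>g. cj n (pauli n (vadd g L)) X) VIs"
      by (intro op_sum_cong) (simp add: cj_pauli_mult[OF VI_V LV])
    also have "\<dots> = op_sum n (\<lambda>g. cj n (pauli n g) X) VIs"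
    proof (rule op_sum_reindex_bij)
      show "bij_betw (\<lambda>g. vadd g L) VIs VIs"
      proof (rule bij_betw_byWitness[of _ "\<lambda>g. vsub g L"])
        show "\<forall>a\<in>VIs. vsub (vadd a L) L = a" by (auto simp: vadd_def vsub_def)
        show "\<forall>a\<in>VIs. vadd (vsub a L) L = a" by (auto simp: vadd_def vsub_def)
        show "(\<lambda>g. vadd g L) ` VIs \<subseteq> VIs" using L by (auto intro: VI_vadd)
        show "(\<lambda>g. vsub g L) ` VIs \<subseteq> VIs" using L by (auto intro: VI_vsub)
      qed
    qed
    finally show ?thesis by (simp add: erasure_formula[OF I_sub])
  qed
  have same: "outer n (?A \<phi>) = outer n \<phi>" if phi: "\<phi> \<in> stab_code n C lam" for \<phi>
  proof -
    have "outer n (?A \<phi>) = kraus_apply n Ks (erasure_channel n I (outer n (?A \<phi>)))"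
      using rec[OF AQ[OF phi]] by simp
    also have "\<dots> = kraus_apply n Ks (erasure_channel n I (outer n \<phi>))"
      by (simp add: outer_apply Gam)
    also have "\<dots> = outer n \<phi>" by (rule rec[OF phi])
    finally show ?thesis .
  qed
  have ent: "?A v x * cnj (?A v y) = v x * cnj (v y)" if v: "v \<in> stab_code n C lam" and x: "x \<in> N" and y: "y \<in> N" for v x y
    using same[OF v] outer_entry[OF x y, of "?A v"] outer_entry[OF x y, of v] by simp
  have pol: "?A v x * cnj (?A w y) = v x * cnj (w y)"
    if v: "v \<in> stab_code n C lam" and w: "w \<in> stab_code n C lam" and x: "x \<in> N" and y: "y \<in> N" for v w x y
  proof (rule polar)
    show "?A v x * cnj (?A v y) = v x * cnj (v y)" by (rule ent[OF v x y])
    show "?A w x * cnj (?A w y) = w x * cnj (w y)" by (rule ent[OF w x y])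
    show "(?A v x + ?A w x) * cnj (?A v y + ?A w y) = (v x + w x) * cnj (v y + w y)"
      using ent[OF Q_add[OF v w] x y] by (simp add: apply_add)
    show "(?A v x + \<i> * ?A w x) * cnj (?A v y + \<i> * ?A w y) = (v x + \<i> * w x) * cnj (v y + \<i> * w y)"
      using ent[OF Q_add[OF v Q_scal[OF w, of "\<i>"]] x y] by (simp add: apply_add apply_scal)
  qed
  define col where "col = (\<lambda>w x. Pj x w)"
  have colQ: "col w \<in> stab_code n C lam" for w
  proof -
    have q: "col w \<in> qvecs n" using cop_out[OF cop_Pj] by (auto simp: qvecs_def col_def)
    have "op_apply n Pj (col w) = col w"
    proof (rule ext)
      fix x
      show "op_apply n Pj (col w) x = col w x"
      proof (cases "x \<in> N \<and> w \<in> N")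
        case True
        have "op_apply n Pj (col w) x = op_mult n Pj Pj x w"
          using True by (simp add: op_apply_def op_mult_def canon_def col_def)
        then show ?thesis by (simp add: Pj_idem col_def)
      next
        case False
        then show ?thesis
        proof (cases "x \<in> N")
          case True
          with False have "w \<notin> N" by simp
          then have "\<And>z. Pj z w = 0" using cop_out[OF cop_Pj] by blast
          then show ?thesis using True False by (simp add: op_apply_def col_def cop_out[OF cop_Pj])
        qed (simp add: op_apply_def col_def cop_out[OF cop_Pj])
      qed
    qed
    then show ?thesis using q Q_iff by simp
  qed
  let ?M = "op_mult n (pauli n L) Pj"
  have Acol: "?A (col w) x = ?M x w" if x: "x \<in> N" and w: "w \<in> N" for x w
    using x w by (simp add: op_apply_def op_mult_def canon_def col_def)
  have Mrel: "?M x w * cnj (?M y v) = Pj x w * cnj (Pj y v)" if "x \<in> N" "w \<in> N" "y \<in> N" "v \<in> N" for x w y v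
  proof -
    have "?A (col w) x * cnj (?A (col v) y) = col w x * cnj (col v y)" using pol[OF colQ colQ, of x y w v] that by simp
    moreover have "?A (col w) x = ?M x w" "?A (col v) y = ?M y v" using Acol that by auto
    moreover have "col w x = Pj x w" "col v y = Pj y v" by (simp_all add: col_def)
    ultimately show ?thesis by simp
  qed
  obtain y0 v0 where y0: "y0 \<in> N" and v0: "v0 \<in> N" and nz: "Pj y0 v0 \<noteq> 0" using Pj_nonzero by blast
  have Mnz: "?M y0 v0 \<noteq> 0"
  proof
    assume "?M y0 v0 = 0"
    then have "Pj y0 v0 * cnj (Pj y0 v0) = 0" using Mrel[OF y0 v0 y0 v0] by simp
    then show False using nz by simp
  qed
  define \<gamma> where "\<gamma> = cnj (Pj y0 v0) / cnj (?M y0 v0)"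
  have Meq: "?M = op_smult n \<gamma> Pj"
  proof (rule op_eqI[where n=n])
    fix x w assume x: "x \<in> N" and w: "w \<in> N"
    have "?M x w * cnj (?M y0 v0) = Pj x w * cnj (Pj y0 v0)" by (rule Mrel[OF x w y0 v0])
    then have "?M x w = Pj x w * cnj (Pj y0 v0) / cnj (?M y0 v0)" using Mnz by (simp add: field_simps)
    then show "?M x w = op_smult n \<gamma> Pj x w" using x w by (simp add: op_smult_def canon_def \<gamma>_def)
  qed simp_all
  have "tr n (op_mult n (op_adj n (pauli n L)) ?M) = tr n Pj"
    by (simp add: mult_assoc[symmetric] pauli_unitary1[OF LV])
  moreover have "tr n (op_mult n (op_adj n (pauli n L)) ?M) = 0"
  proof -
    have "tr n (op_mult n (op_adj n (pauli n L)) (pauli n c)) = 0" if c: "c \<in> C" for c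
    proof -
      have "vsub c L \<noteq> vzero" using c LC by (auto simp: vsub_eq_zero)
      then show ?thesis
        using pauli_adj_mult[OF LV C_V'[OF c]] tr_pauli[OF V_vsub[OF C_V'[OF c] LV]] by (simp add: tr_smult)
    qed
    then have "tr n (op_mult n (op_adj n (pauli n L)) Pj) = 0"
      by (simp add: Pj_def mult_smult_right mult_sum_right tr_smult tr_sum)
    moreover have "tr n (op_mult n (op_adj n (pauli n L)) ?M) = \<gamma> * tr n (op_mult n (op_adj n (pauli n L)) Pj)"
      by (simp only: Meq mult_smult_right tr_smult)
    ultimately show ?thesis by simp
  qed
  ultimately have "tr n Pj = 0" by simp
  moreover have "card N > 0" by (rule card_basis_pos)
  ultimately show False using tr_Pj card_C_pos by simp
qed

lemma shorten_eq: "shorten I (D :: ((nat \<Rightarrow> 'a) \<times> (nat \<Rightarrow> 'a)) set) = {y \<in> D. \<forall>j. j \<notin> I \<longrightarrow> fst y j = 0 \<and> snd y j = 0}"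
proof -
  have p: "proj I y = y" if "\<forall>j. j \<notin> I \<longrightarrow> fst y j = 0 \<and> snd y j = 0" for y :: "(nat \<Rightarrow> 'a) \<times> (nat \<Rightarrow> 'a)"
    using that by (auto simp: proj_def fun_eq_iff prod_eq_iff)
  show ?thesis
  proof (intro set_eqI iffI)
    fix x assume "x \<in> shorten I D"
    then obtain y where y: "x = proj I y" "y \<in> D" "{j. fst y j \<noteq> 0} \<union> {j. snd y j \<noteq> 0} \<subseteq> I"
      unfolding shorten_def by blast
    then have z: "\<forall>j. j \<notin> I \<longrightarrow> fst y j = 0 \<and> snd y j = 0" by blast
    then have "x = y" using y(1) p[OF z] by simp
    then show "x \<in> {y \<in> D. \<forall>j. j \<notin> I \<longrightarrow> fst y j = 0 \<and> snd y j = 0}" using y(2) z by simp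
  next
    fix x assume "x \<in> {y \<in> D. \<forall>j. j \<notin> I \<longrightarrow> fst y j = 0 \<and> snd y j = 0}"
    then have x: "x \<in> D" "\<forall>j. j \<notin> I \<longrightarrow> fst x j = 0 \<and> snd x j = 0" by auto
    then have "{j. fst x j \<noteq> 0} \<union> {j. snd x j \<noteq> 0} \<subseteq> I" by blast
    moreover have "x = proj I x" using p x by simp
    ultimately show "x \<in> shorten I D" unfolding shorten_def using x by blast
  qed
qed

lemma main_iff: "corrects_erasures n (stab_code n C lam) I \<longleftrightarrow> shorten I C = shorten I (sympl_dual n C)"
proof
  assume corr: "corrects_erasures n (stab_code n C lam) I"
  show "shorten I C = shorten I (sympl_dual n C)"
  proof (rule ccontr)
    assume ne: "shorten I C \<noteq> shorten I (sympl_dual n C)"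
    have "shorten I C \<subseteq> shorten I (sympl_dual n C)" using C_dual by (auto simp: shorten_eq)
    then obtain L where L1: "L \<in> shorten I (sympl_dual n C)" and L2: "L \<notin> shorten I C" using ne by blast
    then have Ld: "L \<in> sympl_dual n C" and Ls: "\<forall>j. j \<notin> I \<longrightarrow> fst L j = 0 \<and> snd L j = 0"
      by (auto simp: shorten_eq)
    have LC: "L \<notin> C" using L2 Ls by (auto simp: shorten_eq)
    have L: "L \<in> VIs" using Ld Ls dual_V by (auto simp: VI_def)
    show False by (rule fwd[OF corr L Ld LC])
  qed
next
  assume eq: "shorten I C = shorten I (sympl_dual n C)"
  have H: "w \<in> C" if w: "w \<in> VIs" and wd: "w \<in> sympl_dual n C" for w
  proof -
    have "w \<in> shorten I (sympl_dual n C)" using w wd by (auto simp: shorten_eq VI_def)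
    then show ?thesis unfolding eq[symmetric] by (auto simp: shorten_eq)
  qed
  interpret stabH n C lam I by unfold_locales (rule H)
  show "corrects_erasures n (stab_code n C lam) I" by (rule corrects)
qed

end

theorem theorem11:
  fixes n :: nat
    and C :: "((nat \<Rightarrow> 'a::{finite,field}) \<times> (nat \<Rightarrow> 'a)) set"
    and lam :: "'a qop \<Rightarrow> complex"
    and I :: "nat set"
  assumes "linear_code n C"
    and "sympl_self_orth n C"
    and "stab_character n C lam"
    and "I \<subset> {1..n}"
  shows "corrects_erasures n (stab_code n C lam) I \<longleftrightarrow>
         shorten I C = shorten I (sympl_dual n C)"
proof -
  interpret stabI n C lam I
    using assms by unfold_locales auto
  show ?thesis by (rule main_iff)
qed


end
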